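(* Let $U\subset\mathbb{R}^2$ be open, let $x:U\to\mathbb{R}^3$ and $\xi:U\to S^2$ be analytic, with $\xi$ a proper frontal such that the line congruence $\{x,\xi\}$ is normal, and let $\Omega$ be a tangent moving basis of $\xi$ with $D\xi=\Omega\Delta_\Omega^T$. Then every analytic solution $\gamma:I\to U$ of the equation of principal surfaces $$\gamma'^T\Delta_\Omega\,\mathbf{P}\,\mathrm{adj}(\boldsymbol{\mathcal{II}}_\Omega)^T\Delta_\Omega\boldsymbol{\mathcal{I}}_\Omega\Delta_\Omega^T\gamma'=0$$ is either a branch of the singular set $\Sigma(\xi)$ (i.e. $\gamma(I)\subset\Sigma(\xi)$) or an analytic solution of the equation of developable surfaces $$\gamma'^T\mathbf{P}\,\mathrm{adj}(\boldsymbol{\mathcal{II}}_\Omega)\boldsymbol{\mathcal{I}}_\Omega\Delta_\Omega^T\gamma'=0.$$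
   Context: A frontal is a smooth map $f:U\to\mathbb{R}^3$ admitting locally a smooth unit vector field orthogonal to $f_{u_1},f_{u_2}$; proper means its singular set $\Sigma(f)=\{u: f\text{ not immersive at }u\}$ has empty interior. A tangent moving basis of $\xi$ is a smooth $\Omega=(w_1\ w_2):U\to M_{3\times2}(\mathbb{R})$ with linearly independent columns whose span contains $\xi_{u_1},\xi_{u_2}$; then $D\xi=\Omega\Delta_\Omega^T$ for a unique $\Delta_\Omega$, and $\Sigma(\xi)=(\det\Delta_\Omega)^{-1}(0)$. $\boldsymbol{\mathcal{I}}_\Omega=\Omega^T\Omega$, $\boldsymbol{\mathcal{II}}_\Omega=-\Omega^TDx$, $\mathrm{adj}$ is the adjugate, $\mathbf{P}=\begin{pmatrix}0&1\\-1&0\end{pmatrix}$, and the equations are evaluated at $\gamma(t)$ for all $t\in I$. The congruence $\{x,\xi\}$ is normal if there is a surface $S'$ whose normal lines are parallel to the lines through $x(u)$ in direction $\xi(u)$. *)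

theory Defs
  imports "HOL-Analysis.Analysis"
begin

type_synonym R2 = "real^2"
type_synonym R3 = "real^3"

fun Ck_on :: "nat \<Rightarrow> R2 set \<Rightarrow> (R2 \<Rightarrow> 'a::real_normed_vector) \<Rightarrow> bool" where
  "Ck_on 0 U f = continuous_on U f"
| "Ck_on (Suc k) U f = ((\<forall>u\<in>U. f differentiable (at u)) \<and>
       (\<forall>v. Ck_on k U (\<lambda>u. frechet_derivative f (at u) v)))"

definition smooth_on :: "R2 set \<Rightarrow> (R2 \<Rightarrow> 'a::real_normed_vector) \<Rightarrow> bool" where
  "smooth_on U f \<longleftrightarrow> (\<forall>k. Ck_on k U f)"

definition analytic2_on :: "R2 set \<Rightarrow> (R2 \<Rightarrow> 'a::real_normed_vector) \<Rightarrow> bool" where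
  "analytic2_on U f \<longleftrightarrow> (\<forall>a\<in>U. \<exists>r>0. ball a r \<subseteq> U \<and> (\<exists>c :: nat \<times> nat \<Rightarrow> 'a.
      \<forall>h. norm h < r \<longrightarrow>
        ((\<lambda>(i,j). ((h$1)^i * (h$2)^j) *\<^sub>R c (i,j)) has_sum f (a + h)) UNIV))"

definition analytic1_on :: "real set \<Rightarrow> (real \<Rightarrow> 'a::real_normed_vector) \<Rightarrow> bool" where
  "analytic1_on I f \<longleftrightarrow> (\<forall>a\<in>I. \<exists>r>0. ball a r \<subseteq> I \<and> (\<exists>c :: nat \<Rightarrow> 'a.
      \<forall>h. \<bar>h\<bar> < r \<longrightarrow> ((\<lambda>n. (h^n) *\<^sub>R c n) has_sum f (a + h)) UNIV))"

definition singular_set :: "R2 set \<Rightarrow> (R2 \<Rightarrow> R3) \<Rightarrow> R2 set" where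
  "singular_set U f = {u\<in>U. \<not> inj (frechet_derivative f (at u))}"

definition frontal :: "R2 set \<Rightarrow> (R2 \<Rightarrow> R3) \<Rightarrow> bool" where
  "frontal U f \<longleftrightarrow> smooth_on U f \<and> (\<forall>u\<in>U. \<exists>V. open V \<and> u \<in> V \<and> V \<subseteq> U \<and>
     (\<exists>\<nu> :: R2 \<Rightarrow> R3. smooth_on V \<nu> \<and> (\<forall>v\<in>V. norm (\<nu> v) = 1 \<and>
        (\<forall>j. \<nu> v \<bullet> column j (jacobian f (at v)) = 0))))"

definition proper_frontal :: "R2 set \<Rightarrow> (R2 \<Rightarrow> R3) \<Rightarrow> bool" where
  "proper_frontal U f \<longleftrightarrow> frontal U f \<and> interior (singular_set U f) = {}"

definition tangent_moving_basis :: "R2 set \<Rightarrow> (R2 \<Rightarrow> R3) \<Rightarrow> (R2 \<Rightarrow> real^2^3) \<Rightarrow> bool" where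
  "tangent_moving_basis U \<xi> \<Omega> \<longleftrightarrow> smooth_on U \<Omega> \<and>
     (\<forall>u\<in>U. (\<forall>a b. a *\<^sub>R column 1 (\<Omega> u) + b *\<^sub>R column 2 (\<Omega> u) = 0 \<longrightarrow> a = 0 \<and> b = 0)
        \<and> (\<forall>j. column j (jacobian \<xi> (at u)) \<in> span (columns (\<Omega> u))))"

definition Delta :: "(R2 \<Rightarrow> R3) \<Rightarrow> (R2 \<Rightarrow> real^2^3) \<Rightarrow> R2 \<Rightarrow> real^2^2" where
  "Delta \<xi> \<Omega> u = (THE D. jacobian \<xi> (at u) = \<Omega> u ** transpose D)"

definition first_ff :: "(R2 \<Rightarrow> real^2^3) \<Rightarrow> R2 \<Rightarrow> real^2^2" where
  "first_ff \<Omega> u = transpose (\<Omega> u) ** \<Omega> u"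

definition second_ff :: "(R2 \<Rightarrow> R3) \<Rightarrow> (R2 \<Rightarrow> real^2^3) \<Rightarrow> R2 \<Rightarrow> real^2^2" where
  "second_ff x \<Omega> u = - (transpose (\<Omega> u) ** jacobian x (at u))"

definition adj2 :: "real^2^2 \<Rightarrow> real^2^2" where
  "adj2 A = (\<chi> i j. if i = 1 \<and> j = 1 then A$2$2 else if i = 1 \<and> j = 2 then - A$1$2
                    else if i = 2 \<and> j = 1 then - A$2$1 else A$1$1)"

definition Pmat :: "real^2^2" where
  "Pmat = (\<chi> i j. if i = 1 \<and> j = 2 then 1 else if i = 2 \<and> j = 1 then -1 else 0)"

definition normal_congruence :: "R2 set \<Rightarrow> (R2 \<Rightarrow> R3) \<Rightarrow> (R2 \<Rightarrow> R3) \<Rightarrow> bool" where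
  "normal_congruence U x \<xi> \<longleftrightarrow> (\<exists>lam :: R2 \<Rightarrow> real. smooth_on U lam \<and>
     (\<forall>u\<in>U. \<forall>j. \<xi> u \<bullet> column j (jacobian (\<lambda>v. x v + lam v *\<^sub>R \<xi> v) (at u)) = 0))"

end

theory Submission
  imports Defs "HOL-Complex_Analysis.Complex_Analysis"
begin


definition sq :: "nat \<Rightarrow> (nat \<times> nat) set" where "sq N = {..<N} \<times> {..<N}"

lemma finite_sq[simp]: "finite (sq N)" by (simp add: sq_def)

lemma filterlim_sq: "filterlim sq (finite_subsets_at_top UNIV) sequentially"
  unfolding filterlim_finite_subsets_at_top
proof (safe, goal_cases)
  case (1 X)
  then obtain n where n: "X \<subseteq> {..<n} \<times> {..<n}"
  proof -
    obtain a where "fst ` X \<subseteq> {..<a}" using 1 by (meson finite_imageI finite_nat_set_iff_bounded lessThan_iff subsetI)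
    moreover obtain b where "snd ` X \<subseteq> {..<b}" using 1 by (meson finite_imageI finite_nat_set_iff_bounded lessThan_iff subsetI)
    ultimately have "X \<subseteq> {..<a+b} \<times> {..<a+b}" by force
    then show ?thesis using that by blast
  qed
  show ?case using eventually_ge_at_top[of n]
    by eventually_elim (use n in \<open>auto simp: sq_def\<close>)
qed

lemma has_sum_sq: "(f has_sum s) UNIV \<Longrightarrow> (\<lambda>N. sum f (sq N)) \<longlonglongrightarrow> s"
  unfolding has_sum_def by (rule filterlim_compose[OF _ filterlim_sq])

lemma infsum_compl_sq:
  fixes f :: "nat \<times> nat \<Rightarrow> 'a::banach"
  assumes "f summable_on UNIV"
  shows "infsum f (- sq N) = infsum f UNIV - sum f (sq N)"
proof -
  have "infsum f (sq N \<union> - sq N) = infsum f (sq N) + infsum f (- sq N)"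
    by (rule infsum_Un_disjoint) (auto intro: summable_on_subset_banach[OF assms])
  then show ?thesis by simp
qed

lemma tail_sq:
  fixes f :: "nat \<times> nat \<Rightarrow> 'a::banach"
  assumes "f summable_on UNIV"
  shows "(\<lambda>N. infsum f (- sq N)) \<longlonglongrightarrow> 0"
proof -
  have "(\<lambda>N. infsum f UNIV - sum f (sq N)) \<longlonglongrightarrow> infsum f UNIV - infsum f UNIV"
    by (intro tendsto_diff tendsto_const has_sum_sq) (use assms in simp)
  then show ?thesis by (simp add: infsum_compl_sq[OF assms])
qed

lemma infsum_has_derivative:
  fixes f :: "nat \<times> nat \<Rightarrow> 'a::real_normed_vector \<Rightarrow> 'b::banach"
    and f' :: "nat \<times> nat \<Rightarrow> 'a \<Rightarrow> 'a \<Rightarrow> 'b"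
  assumes S: "convex S"
    and df: "\<And>k x. x \<in> S \<Longrightarrow> (f k has_derivative f' k x) (at x within S)"
    and bd: "\<And>k x v. x \<in> S \<Longrightarrow> norm (f' k x v) \<le> M k * norm v"
    and M: "M summable_on UNIV" and M0: "\<And>k. M k \<ge> 0"
    and fs: "\<And>x. x \<in> S \<Longrightarrow> (\<lambda>k. f k x) summable_on UNIV"
    and x: "x \<in> S"
  shows "((\<lambda>x. infsum (\<lambda>k. f k x) UNIV) has_derivative (\<lambda>v. infsum (\<lambda>k. f' k x v) UNIV)) (at x within S)"
proof -
  have Ms: "M summable_on A" for A using M subset_UNIV by (rule summable_on_subset)
  have Mv: "(\<lambda>k. M k * norm v) summable_on A" for v A by (rule summable_on_cmult_left[OF Ms])
  have f'a: "(\<lambda>k. f' k y v) abs_summable_on A" if "y \<in> S" for y v A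
  proof (rule summable_on_comparison_test[OF Mv])
    show "norm (f' k y v) \<le> M k * norm v" for k by (rule bd[OF that])
  qed simp
  have f's: "(\<lambda>k. f' k y v) summable_on A" if "y \<in> S" for y v A
    by (rule abs_summable_summable[OF f'a[OF that]])
  define fn where "fn N y = sum (\<lambda>k. f k y) (sq N)" for N y
  define fn' where "fn' N y v = sum (\<lambda>k. f' k y v) (sq N)" for N y v
  have "\<exists>g. \<forall>y\<in>S. (\<lambda>n. fn n y) \<longlonglongrightarrow> g y \<and> (g has_derivative (\<lambda>v. infsum (\<lambda>k. f' k y v) UNIV)) (at y within S)"
  proof (rule has_derivative_sequence[OF S _ _ x])
    show "(fn n has_derivative fn' n y) (at y within S)" if "y \<in> S" for n y
      unfolding fn_def fn'_def by (rule has_derivative_sum) (rule df[OF that])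
    show "\<forall>\<^sub>F n in sequentially. \<forall>y\<in>S. \<forall>h. norm (fn' n y h - infsum (\<lambda>k. f' k y h) UNIV) \<le> e * norm h"
      if "e > 0" for e
    proof -
      have "\<forall>\<^sub>F n in sequentially. dist (infsum M (- sq n)) 0 < e"
        using tail_sq[OF M] that by (rule tendstoD)
      then show ?thesis
      proof eventually_elim
        case (elim n)
        then have en: "infsum M (- sq n) \<le> e" by simp
        show ?case
        proof (intro ballI allI)
          fix y h assume y: "y \<in> S"
          have "infsum (\<lambda>k. f' k y h) (- sq n) = infsum (\<lambda>k. f' k y h) UNIV - fn' n y h"
            unfolding fn'_def by (rule infsum_compl_sq[OF f's[OF y]])
          then have "norm (fn' n y h - infsum (\<lambda>k. f' k y h) UNIV) = norm (infsum (\<lambda>k. f' k y h) (- sq n))"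
            by (simp add: norm_minus_commute)
          also have "\<dots> \<le> infsum (\<lambda>k. norm (f' k y h)) (- sq n)"
            by (rule norm_infsum_bound[OF f'a[OF y]])
          also have "\<dots> \<le> infsum (\<lambda>k. M k * norm h) (- sq n)"
            by (rule infsum_mono[OF f'a[OF y] Mv bd[OF y]])
          also have "\<dots> = infsum M (- sq n) * norm h" by (rule infsum_cmult_left')
          also have "\<dots> \<le> e * norm h"
            using en by (rule mult_right_mono) simp
          finally show "norm (fn' n y h - infsum (\<lambda>k. f' k y h) UNIV) \<le> e * norm h" .
        qed
      qed
    qed
    show "(\<lambda>n. fn n x) \<longlonglongrightarrow> infsum (\<lambda>k. f k x) UNIV"
      unfolding fn_def by (rule has_sum_sq) (rule has_sum_infsum[OF fs[OF x]])
  qed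
  then obtain g where g: "\<forall>y\<in>S. (\<lambda>n. fn n y) \<longlonglongrightarrow> g y \<and> (g has_derivative (\<lambda>v. infsum (\<lambda>k. f' k y v) UNIV)) (at y within S)"
    by (elim exE)
  have gd: "(g has_derivative (\<lambda>v. infsum (\<lambda>k. f' k x v) UNIV)) (at x within S)"
    using g x by blast
  have geq: "infsum (\<lambda>k. f k y) UNIV = g y" if "y \<in> S" for y
  proof (rule LIMSEQ_unique)
    show "(\<lambda>n. fn n y) \<longlonglongrightarrow> g y" using g that by blast
    show "(\<lambda>n. fn n y) \<longlonglongrightarrow> infsum (\<lambda>k. f k y) UNIV"
      unfolding fn_def by (rule has_sum_sq) (rule has_sum_infsum[OF fs[OF that]])
  qed
  show ?thesis
    by (rule has_derivative_transform[OF x geq gd])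
qed


lemma norm2: "norm (x::real^2) = sqrt ((x$1)^2 + (x$2)^2)"
  by (simp add: norm_vec_def L2_set_def sum_2)

lemma pow_bound:
  fixes \<theta> :: real
  assumes "0 \<le> \<theta>" "\<theta> < 1"
  obtains B where "B > 0" "\<And>n. real n * \<theta>^(n-1) \<le> B" "\<And>n. real (Suc n) * \<theta>^n \<le> B"
proof -
  have "(\<lambda>n. of_nat n * \<theta> ^ n) \<longlonglongrightarrow> 0"
    by (rule powser_times_n_limit_0) (use assms in simp)
  then have "Bseq (\<lambda>n. of_nat n * \<theta> ^ n)" by (rule convergent_imp_Bseq[OF convergentI])
  then obtain K where K: "K > 0" "\<And>n. norm (of_nat n * \<theta> ^ n) \<le> K" by (rule BseqE) blast
  have t1: "\<theta>^n \<le> 1" for n using assms by (simp add: power_le_one)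
  have s: "real (Suc n) * \<theta>^n \<le> K + 1" for n
  proof -
    have "real (Suc n) * \<theta>^n = real n * \<theta>^n + \<theta>^n" by (simp add: algebra_simps)
    also have "\<dots> \<le> K + 1" using K(2)[of n] t1[of n] assms by (simp add: abs_mult)
    finally show ?thesis .
  qed
  show ?thesis
  proof (rule that[of "K+1"])
    show "real n * \<theta>^(n-1) \<le> K + 1" for n
      using s[of "n-1"] K(1) by (cases n) auto
  qed (use K s in auto)
qed

definition dser :: "(nat \<times> nat \<Rightarrow> 'a::real_normed_vector) \<Rightarrow> real^2 \<Rightarrow> 'a" where
  "dser c h = infsum (\<lambda>(i,j). ((h$1)^i * (h$2)^j) *\<^sub>R c (i,j)) UNIV"

definition aconv :: "(nat \<times> nat \<Rightarrow> 'a::real_normed_vector) \<Rightarrow> real \<Rightarrow> bool" where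
  "aconv c r \<longleftrightarrow> (\<forall>p q. 0 \<le> p \<longrightarrow> 0 \<le> q \<longrightarrow> p^2 + q^2 < r^2 \<longrightarrow>
      (\<lambda>(i,j). p^i * q^j * norm (c (i,j))) summable_on UNIV)"

definition d1 :: "(nat \<times> nat \<Rightarrow> 'a::real_normed_vector) \<Rightarrow> nat \<times> nat \<Rightarrow> 'a" where
  "d1 c = (\<lambda>(i,j). real (Suc i) *\<^sub>R c (Suc i, j))"

definition d2 :: "(nat \<times> nat \<Rightarrow> 'a::real_normed_vector) \<Rightarrow> nat \<times> nat \<Rightarrow> 'a" where
  "d2 c = (\<lambda>(i,j). real (Suc j) *\<^sub>R c (i, Suc j))"

lemma d1_d2: "d1 (d2 c) = d2 (d1 c)"
  by (simp add: d1_def d2_def fun_eq_iff)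

lemma enlarge:
  fixes p q r :: real
  assumes "0 \<le> p" "0 \<le> q" "p^2 + q^2 < r^2"
  obtains p' q' where "p < p'" "q < q'" "p'^2 + q'^2 < r^2"
proof -
  define \<delta> where "\<delta> = r^2 - (p^2 + q^2)"
  have d0: "\<delta> > 0" using assms by (simp add: \<delta>_def)
  define a where "a = min 1 (\<delta> / (4 * (2*p + 2*q + 1)))"
  have a0: "a > 0" using d0 assms by (simp add: a_def)
  have a1: "a \<le> 1" by (simp add: a_def)
  have a2: "a * (2*p + 2*q + 1) \<le> \<delta> / 4"
  proof -
    have "a \<le> \<delta> / (4 * (2*p + 2*q + 1))" by (simp add: a_def)
    then show ?thesis using assms by (simp add: field_simps)
  qed
  have "a * (2*p + 2*q + 2*a) \<le> a * (2*p + 2*q + 2)"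
    using a0 a1 by (intro mult_left_mono) auto
  have aa: "a * a \<le> a" using a0 a1 by (simp add: mult_le_cancel_left1)
  have "a * p \<ge> 0" "a * q \<ge> 0" using a0 assms by auto
  moreover have e: "(p+a)^2 + (q+a)^2 = p^2 + q^2 + 2*(a*a) + 2*(a*p) + 2*(a*q)"
    by (simp add: power2_eq_square algebra_simps)
  moreover have "4*a + 8*(a*p) + 8*(a*q) \<le> \<delta>" using a2 by (simp add: algebra_simps)
  ultimately have "(p+a)^2 + (q+a)^2 < r^2"
    using a0 aa unfolding \<delta>_def by linarith
  then show ?thesis using a0 by (intro that[of "p+a" "q+a"]) auto
qed

lemma aconvD:
  assumes "aconv c r" "0 \<le> p" "0 \<le> q" "p^2 + q^2 < r^2"
  shows "(\<lambda>(i,j). p^i * q^j * norm (c (i,j))) summable_on A"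
  using assms unfolding aconv_def by (meson subset_UNIV summable_on_subset)

lemma aconv_d1:
  assumes "aconv c r"
  shows "aconv (d1 c) r"
  unfolding aconv_def
proof (intro allI impI)
  fix p q :: real
  assume pq: "0 \<le> p" "0 \<le> q" "p^2 + q^2 < r^2"
  obtain p' q' where p': "p < p'" "q < q'" "p'^2 + q'^2 < r^2" using enlarge[OF pq] by blast
  have p'0: "p' > 0" using pq p' by linarith
  have le: "p'^2 + q^2 \<le> p'^2 + q'^2" using pq p' by (intro add_left_mono power_mono) auto
  have g: "(\<lambda>(i,j). p'^i * q^j * norm (c (i,j))) summable_on UNIV"
    by (rule aconvD[OF assms]) (use p'0 pq p' le in linarith)+
  define sh where "sh = (\<lambda>(i::nat,j::nat). (Suc i, j))"
  have "inj sh" by (auto simp: sh_def inj_def)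
  then have g2: "((\<lambda>(i,j). p'^i * q^j * norm (c (i,j))) \<circ> sh) summable_on UNIV"
    using g by (meson subset_UNIV summable_on_reindex summable_on_subset)
  define \<theta> where "\<theta> = p / p'"
  have th: "0 \<le> \<theta>" "\<theta> < 1" using pq p' p'0 by (auto simp: \<theta>_def)
  obtain B where B: "B > 0" "\<And>n. real n * \<theta>^(n-1) \<le> B" "\<And>n. real (Suc n) * \<theta>^n \<le> B"
    by (rule pow_bound[OF th]) blast
  have bd: "p^i * q^j * norm (d1 c (i,j)) \<le> (B / p') * (((\<lambda>(i,j). p'^i * q^j * norm (c (i,j))) \<circ> sh) (i,j))" for i j
  proof -
    have pi: "p^i = \<theta>^i * p'^i" using p'0 by (simp add: \<theta>_def power_divide)
    have "p^i * q^j * norm (d1 c (i,j)) = (real (Suc i) * \<theta>^i) * (p'^i * q^j * norm (c (Suc i, j)))"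
      by (simp add: d1_def pi)
    also have "\<dots> \<le> B * (p'^i * q^j * norm (c (Suc i, j)))"
      using B(3) pq p'0 by (intro mult_right_mono) auto
    also have "\<dots> = (B / p') * (p'^Suc i * q^j * norm (c (Suc i, j)))"
      using p'0 by simp
    finally show ?thesis by (simp add: sh_def)
  qed
  show "(\<lambda>(i,j). p^i * q^j * norm (d1 c (i,j))) summable_on UNIV"
  proof (rule summable_on_comparison_test[OF summable_on_cmult_right[OF g2, of "B / p'"]])
    show "(case x of (i, j) \<Rightarrow> p ^ i * q ^ j * norm (d1 c (i, j))) \<le> B / p' * ((\<lambda>(i,j). p'^i * q^j * norm (c (i,j))) \<circ> sh) x" for x
      using bd by (cases x) auto
    show "0 \<le> (case x of (i, j) \<Rightarrow> p ^ i * q ^ j * norm (d1 c (i, j)))" for x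
      using pq by (cases x) auto
  qed
qed

definition swp :: "(nat \<times> nat \<Rightarrow> 'a) \<Rightarrow> nat \<times> nat \<Rightarrow> 'a" where
  "swp c = (\<lambda>(i,j). c (j,i))"

lemma swp_swp[simp]: "swp (swp c) = c" by (simp add: swp_def fun_eq_iff)

lemma d2_swp: "d2 c = swp (d1 (swp c))"
  by (simp add: swp_def d1_def d2_def fun_eq_iff)

lemma aconv_swp:
  assumes "aconv c r" shows "aconv (swp c) r"
  unfolding aconv_def
proof (intro allI impI)
  fix p q :: real
  assume pq: "0 \<le> p" "0 \<le> q" "p^2 + q^2 < r^2"
  have "(\<lambda>(i,j). q^i * p^j * norm (c (i,j))) summable_on UNIV"
    using aconvD[OF assms, of q p] pq by (simp add: add.commute)
  then have "(\<lambda>(i,j). q^i * p^j * norm (c (i,j))) summable_on (prod.swap ` UNIV)" by simp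
  then have "((\<lambda>(i,j). q^i * p^j * norm (c (i,j))) \<circ> prod.swap) summable_on UNIV"
    by (subst (asm) summable_on_reindex) auto
  then show "(\<lambda>(i,j). p^i * q^j * norm (swp c (i,j))) summable_on UNIV"
    by (simp add: swp_def o_def case_prod_unfold mult.commute mult.left_commute prod.swap_def)
qed

lemma aconv_d2: "aconv c r \<Longrightarrow> aconv (d2 c) r"
  by (simp add: d2_swp aconv_swp aconv_d1)


lemma box_convex: "convex {h::real^2. \<bar>h$1\<bar> < p \<and> \<bar>h$2\<bar> < q}"
  unfolding convex_def
proof (intro ballI allI impI, goal_cases)
  case (1 x y u v)
  have "\<bar>u * x$k + v * y$k\<bar> < b" if "\<bar>x$k\<bar> < b" "\<bar>y$k\<bar> < b" for k b
  proof -
    have "\<bar>u * x$k + v * y$k\<bar> \<le> u * \<bar>x$k\<bar> + v * \<bar>y$k\<bar>"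
      using 1 by (simp add: abs_mult abs_triangle_ineq[THEN order_trans])
    also have "\<dots> < u * b + v * b"
    proof (cases "u = 0")
      case True then show ?thesis using 1 that by simp
    next
      case False then have "u > 0" using 1 by simp
      then show ?thesis using 1 that
        by (intro add_less_le_mono mult_strict_left_mono mult_left_mono) auto
    qed
    also have "\<dots> = (u + v) * b" by (simp add: algebra_simps)
    also have "\<dots> = b" using 1 by simp
    finally show ?thesis .
  qed
  then show ?case using 1 by simp
qed

lemma box_open: "open {h::real^2. \<bar>h$1\<bar> < p \<and> \<bar>h$2\<bar> < q}"
proof -
  have "{h::real^2. \<bar>h$1\<bar> < p \<and> \<bar>h$2\<bar> < q} = {h. \<bar>h$1\<bar> < p} \<inter> {h. \<bar>h$2\<bar> < q}" by auto
  moreover have "open {h::real^2. \<bar>h$k\<bar> < b}" for k b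
    by (rule open_Collect_less) (auto intro!: continuous_intros)
  ultimately show ?thesis by auto
qed

lemma abs_comp_norm2:
  fixes h :: "real^2"
  assumes "norm h < r"
  shows "\<bar>h$1\<bar>^2 + \<bar>h$2\<bar>^2 < r^2"
proof -
  have s: "sqrt ((h$1)^2 + (h$2)^2) < r" using assms by (simp add: norm2)
  then have r0: "0 \<le> r" by (meson less_le_not_le nle_le order_trans real_sqrt_ge_zero zero_le_power2 add_nonneg_nonneg)
  have "sqrt ((h$1)^2 + (h$2)^2) < sqrt (r^2)" using s r0 by simp
  then have "(h$1)^2 + (h$2)^2 < r^2" by (simp only: real_sqrt_less_iff)
  then show ?thesis by simp
qed

lemma dser_deriv:
  fixes c :: "nat \<times> nat \<Rightarrow> 'a::banach"
  assumes ac: "aconv c r" and h0: "norm h0 < r"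
  shows "(dser c has_derivative (\<lambda>v. v$1 *\<^sub>R dser (d1 c) h0 + v$2 *\<^sub>R dser (d2 c) h0)) (at h0)"
proof -
  have pq0: "\<bar>h0$1\<bar>^2 + \<bar>h0$2\<bar>^2 < r^2" using abs_comp_norm2[OF h0] .
  obtain p q where pq: "\<bar>h0$1\<bar> < p" "\<bar>h0$2\<bar> < q" "p^2 + q^2 < r^2"
    using enlarge[OF _ _ pq0] by auto
  have p0: "p > 0" "q > 0" using pq by (auto intro: le_less_trans)
  obtain p' q' where pq': "p < p'" "q < q'" "p'^2 + q'^2 < r^2"
    using enlarge[of p q r] pq p0 by auto
  have p'0: "p' > 0" "q' > 0" using pq' p0 by auto
  define S where "S = {h::real^2. \<bar>h$1\<bar> < p \<and> \<bar>h$2\<bar> < q}"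
  have S: "convex S" "open S" "h0 \<in> S" using box_convex box_open pq by (auto simp: S_def)
  define f where "f = (\<lambda>(i,j) (h::real^2). ((h$1)^i * (h$2)^j) *\<^sub>R c (i,j))"
  define T1 where "T1 = (\<lambda>(i,j) (h::real^2). (real i * (h$1)^(i-1) * (h$2)^j) *\<^sub>R c (i,j))"
  define T2 where "T2 = (\<lambda>(i,j) (h::real^2). (real j * (h$1)^i * (h$2)^(j-1)) *\<^sub>R c (i,j))"
  define f' where "f' = (\<lambda>k h (v::real^2). v$1 *\<^sub>R T1 k h + v$2 *\<^sub>R T2 k h)"
  define M where "M = (\<lambda>(i,j). (real i * p^(i-1) * q^j + real j * p^i * q^(j-1)) * norm (c (i,j)))"
  have vd: "((\<lambda>x::real^2. x$m) has_derivative (\<lambda>h. h$m)) F" for m F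
    by (rule bounded_linear_imp_has_derivative) (rule bounded_linear_vec_nth)
  have df: "(f k has_derivative f' k h) (at h within S)" for k h
  proof -
    obtain i j where k: "k = (i,j)" by fastforce
    show ?thesis unfolding k f_def f'_def T1_def T2_def
      by (auto intro!: derivative_eq_intros vd simp: algebra_simps)
  qed
  have T1b: "norm (T1 k h) \<le> M k" and T2b: "norm (T2 k h) \<le> M k" if "h \<in> S" for k h
  proof -
    obtain i j where k: "k = (i,j)" by fastforce
    have a1: "\<bar>h$1\<bar> \<le> p" "\<bar>h$2\<bar> \<le> q" using that by (auto simp: S_def)
    have e1: "\<bar>h$1\<bar>^n \<le> p^n" "\<bar>h$2\<bar>^n \<le> q^n" for n using a1 by (auto intro: power_mono)
    have n1: "norm (T1 k h) \<le> real i * p^(i-1) * q^j * norm (c (i,j))"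
      unfolding k T1_def using e1 p0 by (auto simp: abs_mult power_abs intro!: mult_mono mult_left_mono)
    have n2: "norm (T2 k h) \<le> real j * p^i * q^(j-1) * norm (c (i,j))"
      unfolding k T2_def using e1 p0 by (auto simp: abs_mult power_abs intro!: mult_mono mult_left_mono)
    have z: "0 \<le> real i * p^(i-1) * q^j * norm (c (i,j))" "0 \<le> real j * p^i * q^(j-1) * norm (c (i,j))"
      using p0 by auto
    show "norm (T1 k h) \<le> M k" using n1 z unfolding M_def k by (simp add: distrib_right)
    show "norm (T2 k h) \<le> M k" using n2 z unfolding M_def k by (simp add: distrib_right)
  qed
  have bd: "norm (f' k h v) \<le> (2 * M k) * norm v" if "h \<in> S" for k h v
  proof -
    have "norm (f' k h v) \<le> \<bar>v$1\<bar> * norm (T1 k h) + \<bar>v$2\<bar> * norm (T2 k h)"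
      unfolding f'_def by (rule order_trans[OF norm_triangle_ineq]) simp
    also have "\<dots> \<le> norm v * M k + norm v * M k"
      by (intro add_mono mult_mono component_le_norm_cart T1b T2b that) auto
    finally show ?thesis by simp
  qed
  have M0: "M k \<ge> 0" for k using p0 by (auto simp: M_def split: prod.splits)
  obtain B1 where B1: "B1 > 0" "\<And>n. real n * (p/p')^(n-1) \<le> B1" "\<And>n. real (Suc n) * (p/p')^n \<le> B1"
    by (rule pow_bound[of "p/p'"]) (use p0 pq' in auto)
  obtain B2 where B2: "B2 > 0" "\<And>n. real n * (q/q')^(n-1) \<le> B2" "\<And>n. real (Suc n) * (q/q')^n \<le> B2"
    by (rule pow_bound[of "q/q'"]) (use p0 pq' in auto)
  have pb: "real n * p^(n-1) \<le> (B1/p') * p'^n" for n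
  proof (cases n)
    case 0 then show ?thesis using B1 p'0 by simp
  next
    case (Suc m)
    have "real n * p^(n-1) = (real n * (p/p')^(n-1)) * p'^m"
      using p'0 Suc by (simp add: power_divide)
    also have "\<dots> \<le> B1 * p'^m" using B1 p'0 by (intro mult_right_mono) auto
    also have "\<dots> = (B1/p') * p'^n" using Suc p'0 by simp
    finally show ?thesis .
  qed
  have qb: "real n * q^(n-1) \<le> (B2/q') * q'^n" for n
  proof (cases n)
    case 0 then show ?thesis using B2 p'0 by simp
  next
    case (Suc m)
    have "real n * q^(n-1) = (real n * (q/q')^(n-1)) * q'^m"
      using p'0 Suc by (simp add: power_divide)
    also have "\<dots> \<le> B2 * q'^m" using B2 p'0 by (intro mult_right_mono) auto
    also have "\<dots> = (B2/q') * q'^n" using Suc p'0 by simp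
    finally show ?thesis .
  qed
  have Msum: "(\<lambda>k. 2 * M k) summable_on UNIV"
  proof -
    have g: "(\<lambda>(i,j). p'^i * q'^j * norm (c (i,j))) summable_on UNIV"
      by (rule aconvD[OF ac]) (use pq' p'0 in linarith)+
    have "M k \<le> (B1/p' + B2/q') * (case k of (i,j) \<Rightarrow> p'^i * q'^j * norm (c (i,j)))" for k
    proof -
      obtain i j where k: "k = (i,j)" by fastforce
      have "real i * p^(i-1) * q^j \<le> (B1/p') * p'^i * q'^j"
        by (rule mult_mono[OF pb[of i] power_mono]) (use p0 pq' B1 p'0 in auto)
      moreover have "real j * p^i * q^(j-1) \<le> (B2/q') * p'^i * q'^j"
      proof -
        have "real j * p^i * q^(j-1) = p^i * (real j * q^(j-1))" by simp
        also have "\<dots> \<le> p'^i * ((B2/q') * q'^j)"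
          by (rule mult_mono[OF power_mono qb[of j]]) (use p0 pq' B2 p'0 in auto)
        finally show ?thesis by (simp add: mult.commute mult.left_commute)
      qed
      ultimately have "real i * p^(i-1) * q^j + real j * p^i * q^(j-1) \<le> (B1/p' + B2/q') * p'^i * q'^j"
        by (simp add: algebra_simps)
      then have "(real i * p^(i-1) * q^j + real j * p^i * q^(j-1)) * norm (c (i,j)) \<le> ((B1/p' + B2/q') * p'^i * q'^j) * norm (c (i,j))"
        by (rule mult_right_mono) simp
      then show ?thesis unfolding k M_def by (simp add: mult.assoc)
    qed
    then have "M summable_on UNIV"
      by (intro summable_on_comparison_test[OF summable_on_cmult_right[OF g]] M0) auto
    then show ?thesis by (rule summable_on_cmult_right)
  qed
  have fs: "(\<lambda>k. f k h) summable_on UNIV" if "h \<in> S" for h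
  proof -
    have g: "(\<lambda>(i,j). p^i * q^j * norm (c (i,j))) summable_on UNIV"
      by (rule aconvD[OF ac]) (use pq p0 in linarith)+
    have "(\<lambda>k. f k h) abs_summable_on UNIV"
    proof (rule summable_on_comparison_test[OF g])
      fix k :: "nat \<times> nat"
      obtain i j where k: "k = (i,j)" by fastforce
      have a1: "\<bar>h$1\<bar> \<le> p" "\<bar>h$2\<bar> \<le> q" using that by (auto simp: S_def)
      show "norm (f k h) \<le> (case k of (i,j) \<Rightarrow> p^i * q^j * norm (c (i,j)))"
        unfolding k f_def using a1 by (auto simp: abs_mult power_abs intro!: mult_mono power_mono)
    qed simp
    then show ?thesis by (rule abs_summable_summable)
  qed
  have D: "((\<lambda>h. infsum (\<lambda>k. f k h) UNIV) has_derivative (\<lambda>v. infsum (\<lambda>k. f' k h0 v) UNIV)) (at h0 within S)"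
    by (rule infsum_has_derivative[OF S(1) df bd Msum _ fs S(3)]) (use M0 in auto)
  have T1s: "(\<lambda>k. T1 k h0) summable_on UNIV"
    by (rule abs_summable_summable, rule summable_on_comparison_test[OF _ T1b[OF S(3)]])
       (use Msum in \<open>auto dest: summable_on_cmult_right[where c="1/2"]\<close>)
  have T2s: "(\<lambda>k. T2 k h0) summable_on UNIV"
    by (rule abs_summable_summable, rule summable_on_comparison_test[OF _ T2b[OF S(3)]])
       (use Msum in \<open>auto dest: summable_on_cmult_right[where c="1/2"]\<close>)
  have sh: "inj (\<lambda>(i::nat,j::nat). (Suc i, j))" "inj (\<lambda>(i::nat,j::nat). (i, Suc j))" by (auto simp: inj_def)
  have I1: "infsum (\<lambda>k. T1 k h0) UNIV = dser (d1 c) h0"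
  proof -
    have "infsum (\<lambda>k. T1 k h0) UNIV = infsum (\<lambda>k. T1 k h0) (range (\<lambda>(i,j). (Suc i, j)))"
      by (rule infsum_cong_neutral) (auto simp: T1_def image_iff gr0_conv_Suc)
    also have "\<dots> = infsum ((\<lambda>k. T1 k h0) \<circ> (\<lambda>(i,j). (Suc i, j))) UNIV"
      by (rule infsum_reindex[OF sh(1)])
    also have "\<dots> = dser (d1 c) h0"
      unfolding dser_def d1_def T1_def by (intro infsum_cong) (auto simp: algebra_simps)
    finally show ?thesis .
  qed
  have I2: "infsum (\<lambda>k. T2 k h0) UNIV = dser (d2 c) h0"
  proof -
    have "infsum (\<lambda>k. T2 k h0) UNIV = infsum (\<lambda>k. T2 k h0) (range (\<lambda>(i,j). (i, Suc j)))"
      by (rule infsum_cong_neutral) (auto simp: T2_def image_iff gr0_conv_Suc)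
    also have "\<dots> = infsum ((\<lambda>k. T2 k h0) \<circ> (\<lambda>(i,j). (i, Suc j))) UNIV"
      by (rule infsum_reindex[OF sh(2)])
    also have "\<dots> = dser (d2 c) h0"
      unfolding dser_def d2_def T2_def by (intro infsum_cong) (auto simp: algebra_simps)
    finally show ?thesis .
  qed
  have E: "infsum (\<lambda>k. f' k h0 v) UNIV = v$1 *\<^sub>R dser (d1 c) h0 + v$2 *\<^sub>R dser (d2 c) h0" for v
    unfolding f'_def
    by (subst infsum_add) (auto intro: summable_on_scaleR_right T1s T2s simp: infsum_scaleR_right I1 I2)
  have fe: "(\<lambda>h. infsum (\<lambda>k. f k h) UNIV) = dser c"
    by (simp add: fun_eq_iff dser_def f_def case_prod_unfold)
  show ?thesis using D unfolding E fe at_within_open[OF S(3) S(2)] .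
qed


lemma summable_on_finite_sum:
  fixes g :: "'i \<Rightarrow> 'k \<Rightarrow> real"
  assumes "finite F" "\<And>i. i \<in> F \<Longrightarrow> g i summable_on A"
  shows "(\<lambda>x. \<Sum>i\<in>F. g i x) summable_on A"
  using assms
proof (induction F rule: finite_induct)
  case empty then show ?case by simp
next
  case (insert i F)
  then show ?case by (simp add: summable_on_add)
qed

lemma summable_norm_cart:
  fixes f :: "'k \<Rightarrow> real^'n"
  assumes "f summable_on A"
  shows "(\<lambda>x. norm (f x)) summable_on A"
proof -
  have fi: "(\<lambda>x. f x $ i) summable_on A" for i
    by (rule summable_on_bounded_linear[OF bounded_linear_vec_nth assms])
  have "(\<lambda>x. norm (f x $ i)) summable_on A" for i
    using summable_on_iff_abs_summable_on_real[of "\<lambda>x. f x $ i" A] fi[of i] by simp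
  then have "(\<lambda>x. \<bar>f x $ i\<bar>) summable_on A" for i
    by simp
  then have "(\<lambda>x. \<Sum>i\<in>UNIV. \<bar>f x $ i\<bar>) summable_on A"
    by (intro summable_on_finite_sum) auto
  then show ?thesis
    by (rule summable_on_comparison_test) (auto simp: norm_le_l1_cart)
qed

definition vec2 :: "real \<Rightarrow> real \<Rightarrow> real^2" where
  "vec2 a b = (\<chi> k. if k = 1 then a else b)"

lemma vec2_nth[simp]: "vec2 a b $ 1 = a" "vec2 a b $ 2 = b"
  by (auto simp: vec2_def)

lemma norm_vec2: "norm (vec2 a b) = sqrt (a^2 + b^2)"
  by (simp add: norm2)

lemma analytic2_local:
  fixes f :: "real^2 \<Rightarrow> real^'n"
  assumes "analytic2_on U f" "a \<in> U"
  obtains r c where "r > 0" "ball a r \<subseteq> U" "aconv c r" "\<And>h. norm h < r \<Longrightarrow> f (a + h) = dser c h"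
proof -
  obtain r c where r: "r > 0" "ball a r \<subseteq> U"
    and hs: "\<And>h. norm h < r \<Longrightarrow> ((\<lambda>(i,j). ((h$1)^i * (h$2)^j) *\<^sub>R c (i,j)) has_sum f (a + h)) UNIV"
    using assms unfolding analytic2_on_def by blast
  have "aconv c r"
    unfolding aconv_def
  proof (intro allI impI)
    fix p q :: real assume pq: "0 \<le> p" "0 \<le> q" "p^2 + q^2 < r^2"
    have "norm (vec2 p q) < r"
      using pq r by (simp add: norm_vec2 real_sqrt_less_iff real_less_lsqrt)
    then have "(\<lambda>(i,j). ((vec2 p q $1)^i * (vec2 p q $2)^j) *\<^sub>R c (i,j)) summable_on UNIV"
      using hs summable_on_def by blast
    then have "(\<lambda>k. norm ((\<lambda>(i,j). ((vec2 p q $1)^i * (vec2 p q $2)^j) *\<^sub>R c (i,j)) k)) summable_on UNIV"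
      by (rule summable_norm_cart)
    then show "(\<lambda>(i,j). p^i * q^j * norm (c (i,j))) summable_on UNIV"
      using pq by (simp add: case_prod_unfold abs_mult)
  qed
  moreover have "f (a + h) = dser c h" if "norm h < r" for h
    using hs[OF that] unfolding dser_def by (simp add: infsumI)
  ultimately show ?thesis using r that by blast
qed


definition pd :: "(real^2 \<Rightarrow> 'a::real_normed_vector) \<Rightarrow> 2 \<Rightarrow> real^2 \<Rightarrow> 'a" where
  "pd f j v = frechet_derivative f (at v) (axis j 1)"

definition dd :: "2 \<Rightarrow> (nat \<times> nat \<Rightarrow> 'a::real_normed_vector) \<Rightarrow> nat \<times> nat \<Rightarrow> 'a" where
  "dd j c = (if j = 1 then d1 c else d2 c)"

lemma aconv_dd: "aconv c r \<Longrightarrow> aconv (dd j c) r"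
  by (simp add: dd_def aconv_d1 aconv_d2)

lemma dd_comm: "dd i (dd j c) = dd j (dd i c)"
  by (auto simp: dd_def d1_d2)

lemma axis2_nth[simp]: "axis (1::2) (1::real) $ 1 = 1" "axis (1::2) (1::real) $ 2 = 0"
  "axis (2::2) (1::real) $ 1 = 0" "axis (2::2) (1::real) $ 2 = 1"
  by (auto simp: axis_def)

lemma local_series_deriv:
  fixes c :: "nat \<times> nat \<Rightarrow> 'a::banach"
  assumes ac: "aconv c r" and f: "\<And>h. norm h < r \<Longrightarrow> f (a + h) = dser c h" and v: "v \<in> ball a r"
  shows "(f has_derivative (\<lambda>w. w$1 *\<^sub>R dser (d1 c) (v - a) + w$2 *\<^sub>R dser (d2 c) (v - a))) (at v)"
proof -
  have nv: "norm (v - a) < r" using v by (simp add: dist_norm norm_minus_commute)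
  have "((\<lambda>y. dser c (y - a)) has_derivative (\<lambda>w. w$1 *\<^sub>R dser (d1 c) (v - a) + w$2 *\<^sub>R dser (d2 c) (v - a))) (at v)"
    using has_derivative_compose[OF has_derivative_diff[OF has_derivative_ident has_derivative_const] dser_deriv[OF ac nv]]
    by simp
  then show ?thesis
  proof (rule has_derivative_transform_within_open[OF _ open_ball v])
    fix y assume "y \<in> ball a r"
    then have "norm (y - a) < r" by (simp add: dist_norm norm_minus_commute)
    then show "dser c (y - a) = f y" using f[of "y - a"] by simp
  qed
qed

lemma local_series_pd:
  fixes c :: "nat \<times> nat \<Rightarrow> 'a::banach"
  assumes ac: "aconv c r" and f: "\<And>h. norm h < r \<Longrightarrow> f (a + h) = dser c h" and v: "v \<in> ball a r"
  shows "pd f j v = dser (dd j c) (v - a)"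
proof -
  have "frechet_derivative f (at v) = (\<lambda>w. w$1 *\<^sub>R dser (d1 c) (v - a) + w$2 *\<^sub>R dser (d2 c) (v - a))"
    using local_series_deriv[OF assms] by (simp add: frechet_derivative_at[symmetric])
  then show ?thesis using exhaust_2[of j] by (auto simp: pd_def dd_def)
qed

lemma local_series_pd_series:
  fixes c :: "nat \<times> nat \<Rightarrow> 'a::banach"
  assumes ac: "aconv c r" and f: "\<And>h. norm h < r \<Longrightarrow> f (a + h) = dser c h"
  shows "\<And>h. norm h < r \<Longrightarrow> pd f j (a + h) = dser (dd j c) h"
proof -
  fix h :: "real^2" assume "norm h < r"
  then have "a + h \<in> ball a r" by (simp add: dist_norm)
  then show "pd f j (a + h) = dser (dd j c) h" using local_series_pd[OF ac f] by simp
qed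

lemma local_series_differentiable:
  fixes c :: "nat \<times> nat \<Rightarrow> 'a::banach"
  assumes ac: "aconv c r" and f: "\<And>h. norm h < r \<Longrightarrow> f (a + h) = dser c h" and v: "v \<in> ball a r"
  shows "f differentiable (at v)"
  using local_series_deriv[OF assms] by (auto simp: differentiable_def)

lemma local_series_pd_pd_sym:
  fixes c :: "nat \<times> nat \<Rightarrow> 'a::banach"
  assumes ac: "aconv c r" and f: "\<And>h. norm h < r \<Longrightarrow> f (a + h) = dser c h" and v: "v \<in> ball a r"
  shows "pd (pd f j) i v = pd (pd f i) j v"
proof -
  have "pd (pd f j) i v = dser (dd i (dd j c)) (v - a)"
    by (rule local_series_pd[OF aconv_dd[OF ac] local_series_pd_series[OF ac f] v])
  moreover have "pd (pd f i) j v = dser (dd j (dd i c)) (v - a)"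
    by (rule local_series_pd[OF aconv_dd[OF ac] local_series_pd_series[OF ac f] v])
  ultimately show ?thesis by (simp add: dd_comm)
qed


lemma deriv_along:
  fixes g :: "real^2 \<Rightarrow> real"
  assumes "g differentiable (at (w + t *\<^sub>R e))"
  shows "((\<lambda>s. g (w + s *\<^sub>R e)) has_real_derivative frechet_derivative g (at (w + t *\<^sub>R e)) e) (at t)"
proof -
  have dg: "(g has_derivative frechet_derivative g (at (w + t *\<^sub>R e))) (at (w + t *\<^sub>R e))"
    using assms by (rule frechet_derivative_works[THEN iffD1])
  have lin: "linear (frechet_derivative g (at (w + t *\<^sub>R e)))"
    using dg has_derivative_linear by blast
  have dl: "((\<lambda>s. w + s *\<^sub>R e) has_derivative (\<lambda>s. s *\<^sub>R e)) (at t)"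
    by (auto intro!: derivative_eq_intros)
  have "((\<lambda>s. g (w + s *\<^sub>R e)) has_derivative (\<lambda>s. frechet_derivative g (at (w + t *\<^sub>R e)) (s *\<^sub>R e))) (at t)"
    using has_derivative_compose[OF dl dg] by (simp add: o_def)
  moreover have "(\<lambda>s. frechet_derivative g (at (w + t *\<^sub>R e)) (s *\<^sub>R e)) = (*) (frechet_derivative g (at (w + t *\<^sub>R e)) e)"
    using linear_scale[OF lin] by (auto simp: fun_eq_iff)
  ultimately show ?thesis by (simp add: has_field_derivative_def)
qed

lemma schwarz:
  fixes \<phi> :: "real^2 \<Rightarrow> real"
  assumes U: "open U" "u \<in> U"
    and d0: "\<And>v. v \<in> U \<Longrightarrow> \<phi> differentiable (at v)"
    and d1: "\<And>v k. v \<in> U \<Longrightarrow> pd \<phi> k differentiable (at v)"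
    and c2: "\<And>k l. continuous_on U (pd (pd \<phi> k) l)"
  shows "pd (pd \<phi> 1) 2 u = pd (pd \<phi> 2) 1 u"
proof (rule ccontr)
  define e1 :: "real^2" where "e1 = axis 1 1"
  define e2 :: "real^2" where "e2 = axis 2 1"
  define g12 where "g12 = pd (pd \<phi> 1) 2"
  define g21 where "g21 = pd (pd \<phi> 2) 1"
  assume ne: "pd (pd \<phi> 1) 2 u \<noteq> pd (pd \<phi> 2) 1 u"
  define \<epsilon> where "\<epsilon> = \<bar>g12 u - g21 u\<bar> / 2"
  have \<epsilon>: "\<epsilon> > 0" using ne by (simp add: \<epsilon>_def g12_def g21_def)
  obtain \<delta> where \<delta>: "\<delta> > 0" "ball u \<delta> \<subseteq> U" using U open_contains_ball by blast
  have ic: "isCont (pd (pd \<phi> k) l) u" for k l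
    using c2[of k l] U by (simp add: continuous_on_eq_continuous_at)
  obtain \<delta>1 where \<delta>1: "\<delta>1 > 0" "\<And>x'. dist x' u < \<delta>1 \<Longrightarrow> dist (g12 x') (g12 u) < \<epsilon>"
    using ic[of 1 2] \<epsilon> unfolding continuous_at_eps_delta g12_def by blast
  obtain \<delta>2 where \<delta>2: "\<delta>2 > 0" "\<And>x'. dist x' u < \<delta>2 \<Longrightarrow> dist (g21 x') (g21 u) < \<epsilon>"
    using ic[of 2 1] \<epsilon> unfolding continuous_at_eps_delta g21_def by blast
  define s where "s = min \<delta> (min \<delta>1 \<delta>2) / 4"
  have s0: "s > 0" using \<delta> \<delta>1 \<delta>2 by (simp add: s_def)
  have near: "dist (u + a *\<^sub>R e1 + b *\<^sub>R e2) u < min \<delta> (min \<delta>1 \<delta>2)"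
    if "0 \<le> a" "a \<le> s" "0 \<le> b" "b \<le> s" for a b
  proof -
    have "dist (u + a *\<^sub>R e1 + b *\<^sub>R e2) u = norm (a *\<^sub>R e1 + b *\<^sub>R e2)"
      by (simp add: dist_norm)
    also have "\<dots> \<le> norm (a *\<^sub>R e1) + norm (b *\<^sub>R e2)" by (rule norm_triangle_ineq)
    also have "\<dots> = a + b" using that by (simp add: e1_def e2_def)
    also have "\<dots> < min \<delta> (min \<delta>1 \<delta>2)" using that s0 unfolding s_def by linarith
    finally show ?thesis .
  qed
  have inU: "u + a *\<^sub>R e1 + b *\<^sub>R e2 \<in> U" if "0 \<le> a" "a \<le> s" "0 \<le> b" "b \<le> s" for a b
    using near[OF that] \<delta> by (auto simp: dist_commute)
  define D where "D = \<phi> (u + s *\<^sub>R e1 + s *\<^sub>R e2) - \<phi> (u + s *\<^sub>R e1) - \<phi> (u + s *\<^sub>R e2) + \<phi> u"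
  have "\<exists>p. dist p u < min \<delta> (min \<delta>1 \<delta>2) \<and> D = s * (s * g12 p)"
  proof -
    define A where "A t = \<phi> (u + s *\<^sub>R e2 + t *\<^sub>R e1) - \<phi> (u + t *\<^sub>R e1)" for t
    have dA: "DERIV A t :> (pd \<phi> 1 (u + s *\<^sub>R e2 + t *\<^sub>R e1) - pd \<phi> 1 (u + t *\<^sub>R e1))"
      if "0 \<le> t" "t \<le> s" for t
    proof -
      have m1: "u + s *\<^sub>R e2 + t *\<^sub>R e1 \<in> U" using inU[of t s] that s0 by (simp add: algebra_simps)
      have m2: "u + t *\<^sub>R e1 \<in> U" using inU[of t 0] that s0 by simp
      show ?thesis unfolding A_def pd_def e1_def
        by (intro DERIV_diff deriv_along d0) (use m1 m2 e1_def in auto)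
    qed
    obtain \<tau> where \<tau>: "0 < \<tau>" "\<tau> < s" "A s - A 0 = (s - 0) * (pd \<phi> 1 (u + s *\<^sub>R e2 + \<tau> *\<^sub>R e1) - pd \<phi> 1 (u + \<tau> *\<^sub>R e1))"
      using MVT2[OF s0 dA] by auto
    define B where "B t = pd \<phi> 1 (u + \<tau> *\<^sub>R e1 + t *\<^sub>R e2)" for t
    have dB: "DERIV B t :> g12 (u + \<tau> *\<^sub>R e1 + t *\<^sub>R e2)" if "0 \<le> t" "t \<le> s" for t
    proof -
      have m1: "u + \<tau> *\<^sub>R e1 + t *\<^sub>R e2 \<in> U" using inU[of \<tau> t] that \<tau> by simp
      show ?thesis unfolding B_def g12_def pd_def[of "pd \<phi> 1"] e2_def
        by (intro deriv_along d1) (use m1 e2_def in auto)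
    qed
    obtain \<sigma> where \<sigma>: "0 < \<sigma>" "\<sigma> < s" "B s - B 0 = (s - 0) * g12 (u + \<tau> *\<^sub>R e1 + \<sigma> *\<^sub>R e2)"
      using MVT2[OF s0 dB] by auto
    have "D = A s - A 0" by (simp add: D_def A_def algebra_simps)
    also have "\<dots> = s * (B s - B 0)" using \<tau> by (simp add: B_def algebra_simps)
    also have "\<dots> = s * (s * g12 (u + \<tau> *\<^sub>R e1 + \<sigma> *\<^sub>R e2))" using \<sigma> by simp
    finally show ?thesis using near[of \<tau> \<sigma>] \<tau> \<sigma> by auto
  qed
  then obtain p where p: "dist p u < min \<delta> (min \<delta>1 \<delta>2)" "D = s * (s * g12 p)" by blast
  have "\<exists>q. dist q u < min \<delta> (min \<delta>1 \<delta>2) \<and> D = s * (s * g21 q)"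
  proof -
    define A where "A t = \<phi> (u + s *\<^sub>R e1 + t *\<^sub>R e2) - \<phi> (u + t *\<^sub>R e2)" for t
    have dA: "DERIV A t :> (pd \<phi> 2 (u + s *\<^sub>R e1 + t *\<^sub>R e2) - pd \<phi> 2 (u + t *\<^sub>R e2))"
      if "0 \<le> t" "t \<le> s" for t
    proof -
      have m1: "u + s *\<^sub>R e1 + t *\<^sub>R e2 \<in> U" using inU[of s t] that s0 by (simp add: algebra_simps)
      have m2: "u + t *\<^sub>R e2 \<in> U" using inU[of 0 t] that s0 by simp
      show ?thesis unfolding A_def pd_def e2_def
        by (intro DERIV_diff deriv_along d0) (use m1 m2 e2_def in auto)
    qed
    obtain \<tau> where \<tau>: "0 < \<tau>" "\<tau> < s" "A s - A 0 = (s - 0) * (pd \<phi> 2 (u + s *\<^sub>R e1 + \<tau> *\<^sub>R e2) - pd \<phi> 2 (u + \<tau> *\<^sub>R e2))"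
      using MVT2[OF s0 dA] by auto
    define B where "B t = pd \<phi> 2 (u + \<tau> *\<^sub>R e2 + t *\<^sub>R e1)" for t
    have dB: "DERIV B t :> g21 (u + t *\<^sub>R e1 + \<tau> *\<^sub>R e2)" if "0 \<le> t" "t \<le> s" for t
    proof -
      have m1: "u + t *\<^sub>R e1 + \<tau> *\<^sub>R e2 \<in> U" using inU[of t \<tau>] that \<tau> by simp
      then have m1': "u + \<tau> *\<^sub>R e2 + t *\<^sub>R e1 \<in> U" by (simp add: algebra_simps)
      have "DERIV B t :> g21 (u + \<tau> *\<^sub>R e2 + t *\<^sub>R e1)"
        unfolding B_def g21_def pd_def[of "pd \<phi> 2"] e1_def
        by (intro deriv_along d1) (use m1' e1_def in auto)
      then show ?thesis by (simp add: algebra_simps)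
    qed
    obtain \<sigma> where \<sigma>: "0 < \<sigma>" "\<sigma> < s" "B s - B 0 = (s - 0) * g21 (u + \<sigma> *\<^sub>R e1 + \<tau> *\<^sub>R e2)"
      using MVT2[OF s0 dB] by auto
    have "D = A s - A 0" by (simp add: D_def A_def algebra_simps)
    also have "\<dots> = s * (B s - B 0)" using \<tau> by (simp add: B_def algebra_simps)
    also have "\<dots> = s * (s * g21 (u + \<sigma> *\<^sub>R e1 + \<tau> *\<^sub>R e2))" using \<sigma> by simp
    finally show ?thesis using near[of \<sigma> \<tau>] \<tau> \<sigma> by auto
  qed
  then obtain q where q: "dist q u < min \<delta> (min \<delta>1 \<delta>2)" "D = s * (s * g21 q)" by blast
  have "g12 p = g21 q" using p q s0 by simp
  moreover have "\<bar>g12 p - g12 u\<bar> < \<epsilon>" using \<delta>1(2)[of p] p by (simp add: dist_real_def)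
  moreover have "\<bar>g21 q - g21 u\<bar> < \<epsilon>" using \<delta>2(2)[of q] q by (simp add: dist_real_def)
  ultimately show False unfolding \<epsilon>_def by (simp add: abs_less_iff abs_if split: if_splits)
qed


lemma column_jacobian: "column j (jacobian f (at v)) = pd f j v"
  by (simp add: column_def jacobian_def matrix_def pd_def vec_eq_iff)

lemma has_derivative_unique_open:
  assumes "(f has_derivative F) (at u)" "(g has_derivative G) (at u)" "open U" "u \<in> U"
    "\<And>v. v \<in> U \<Longrightarrow> f v = g v"
  shows "F = G"
proof -
  have "(g has_derivative F) (at u)"
    by (rule has_derivative_transform_within_open[OF assms(1) assms(3,4)]) (use assms(5) in auto)
  then show ?thesis using assms(2) by (rule has_derivative_unique)
qed

lemma unit_pd_orth:
  fixes \<xi> :: "real^2 \<Rightarrow> real^3"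
  assumes U: "open U" "v \<in> U" and dx: "\<xi> differentiable (at v)" and n: "\<And>w. w \<in> U \<Longrightarrow> norm (\<xi> w) = 1"
  shows "\<xi> v \<bullet> pd \<xi> j v = 0"
proof -
  let ?D = "frechet_derivative \<xi> (at v)"
  have d: "(\<xi> has_derivative ?D) (at v)" using dx frechet_derivative_works by blast
  have dA: "((\<lambda>w. \<xi> w \<bullet> \<xi> w) has_derivative (\<lambda>h. \<xi> v \<bullet> ?D h + ?D h \<bullet> \<xi> v)) (at v)"
    by (rule has_derivative_inner[OF d d])
  have dB: "((\<lambda>w. 1::real) has_derivative (\<lambda>h. 0)) (at v)" by simp
  have "(\<lambda>h. \<xi> v \<bullet> ?D h + ?D h \<bullet> \<xi> v) = (\<lambda>h. 0)"
  proof (rule has_derivative_unique_open[OF dA dB U])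
    show "\<xi> w \<bullet> \<xi> w = 1" if "w \<in> U" for w
      using n[OF that] by (simp add: power2_norm_eq_inner[symmetric])
  qed
  then have "\<xi> v \<bullet> ?D (axis j 1) + ?D (axis j 1) \<bullet> \<xi> v = 0" by (metis (mono_tags))
  then show ?thesis by (simp add: pd_def inner_commute)
qed

lemma congruence_sym:
  fixes x \<xi> :: "real^2 \<Rightarrow> real^3" and lam :: "real^2 \<Rightarrow> real"
  assumes U: "open U" "u \<in> U"
    and d\<xi>: "\<And>v. v \<in> U \<Longrightarrow> \<xi> differentiable (at v)" and n\<xi>: "\<And>v. v \<in> U \<Longrightarrow> norm (\<xi> v) = 1"
    and dx: "\<And>v. v \<in> U \<Longrightarrow> x differentiable (at v)"
    and dx1: "\<And>v j. v \<in> U \<Longrightarrow> pd x j differentiable (at v)"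
    and sx: "\<And>i j. pd (pd x j) i u = pd (pd x i) j u"
    and dl: "\<And>v. v \<in> U \<Longrightarrow> lam differentiable (at v)"
    and dl1: "\<And>v k. v \<in> U \<Longrightarrow> pd lam k differentiable (at v)"
    and cl: "\<And>k l. continuous_on U (pd (pd lam k) l)"
    and nc: "\<And>v j. v \<in> U \<Longrightarrow> \<xi> v \<bullet> column j (jacobian (\<lambda>v. x v + lam v *\<^sub>R \<xi> v) (at v)) = 0"
  shows "pd \<xi> i u \<bullet> pd x j u = pd \<xi> j u \<bullet> pd x i u"
proof -
  have pdy: "pd (\<lambda>v. x v + lam v *\<^sub>R \<xi> v) j v = pd x j v + pd lam j v *\<^sub>R \<xi> v + lam v *\<^sub>R pd \<xi> j v"
    if v: "v \<in> U" for v j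
  proof -
    have "((\<lambda>v. x v + lam v *\<^sub>R \<xi> v) has_derivative
       (\<lambda>h. frechet_derivative x (at v) h + (lam v *\<^sub>R frechet_derivative \<xi> (at v) h + frechet_derivative lam (at v) h *\<^sub>R \<xi> v))) (at v)"
      using dx[OF v] dl[OF v] d\<xi>[OF v]
      by (intro has_derivative_add has_derivative_scaleR) (auto simp: frechet_derivative_works[symmetric])
    then have "frechet_derivative (\<lambda>v. x v + lam v *\<^sub>R \<xi> v) (at v) =
       (\<lambda>h. frechet_derivative x (at v) h + (lam v *\<^sub>R frechet_derivative \<xi> (at v) h + frechet_derivative lam (at v) h *\<^sub>R \<xi> v))"
      by (simp add: frechet_derivative_at[symmetric])
    then show ?thesis by (simp add: pd_def)
  qed
  have key: "\<xi> v \<bullet> pd x j v = - pd lam j v" if v: "v \<in> U" for v j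
  proof -
    have "0 = \<xi> v \<bullet> (pd x j v + pd lam j v *\<^sub>R \<xi> v + lam v *\<^sub>R pd \<xi> j v)"
      using nc[OF v, of j] by (simp add: column_jacobian pdy[OF v])
    also have "\<dots> = \<xi> v \<bullet> pd x j v + pd lam j v * (\<xi> v \<bullet> \<xi> v) + lam v * (\<xi> v \<bullet> pd \<xi> j v)"
      by (simp add: inner_add_right)
    also have "\<dots> = \<xi> v \<bullet> pd x j v + pd lam j v"
      using unit_pd_orth[OF U(1) v d\<xi>[OF v] n\<xi>] n\<xi>[OF v] by (simp add: power2_norm_eq_inner[symmetric])
    finally show ?thesis by linarith
  qed
  have second: "pd \<xi> i u \<bullet> pd x j u + \<xi> u \<bullet> pd (pd x j) i u = - pd (pd lam j) i u" for i j
  proof -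
    have d1: "((\<lambda>v. \<xi> v \<bullet> pd x j v) has_derivative
        (\<lambda>h. \<xi> u \<bullet> frechet_derivative (pd x j) (at u) h + frechet_derivative \<xi> (at u) h \<bullet> pd x j u)) (at u)"
      using d\<xi>[OF U(2)] dx1[OF U(2)] by (intro has_derivative_inner) (auto simp: frechet_derivative_works[symmetric])
    have d2: "((\<lambda>v. - pd lam j v) has_derivative (\<lambda>h. - frechet_derivative (pd lam j) (at u) h)) (at u)"
      using dl1[OF U(2)] by (intro has_derivative_minus) (auto simp: frechet_derivative_works[symmetric])
    have "(\<lambda>h. \<xi> u \<bullet> frechet_derivative (pd x j) (at u) h + frechet_derivative \<xi> (at u) h \<bullet> pd x j u)
        = (\<lambda>h. - frechet_derivative (pd lam j) (at u) h)"
      by (rule has_derivative_unique_open[OF d1 d2 U]) (rule key)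
    then have "\<xi> u \<bullet> frechet_derivative (pd x j) (at u) (axis i 1) + frechet_derivative \<xi> (at u) (axis i 1) \<bullet> pd x j u
        = - frechet_derivative (pd lam j) (at u) (axis i 1)"
      by (metis (mono_tags))
    then show ?thesis by (simp add: pd_def[of \<xi>] pd_def[of "pd x j"] pd_def[of "pd lam j"])
  qed
  have sl: "pd (pd lam j) i u = pd (pd lam i) j u"
  proof -
    have s12: "pd (pd lam 1) 2 u = pd (pd lam 2) 1 u"
      by (rule schwarz[OF U dl dl1 cl])
    show ?thesis using exhaust_2[of i] exhaust_2[of j] s12 by auto
  qed
  have "\<xi> u \<bullet> pd (pd x i) j u = \<xi> u \<bullet> pd (pd x j) i u" using sx[of i j] by simp
  then show ?thesis using second[of i j] second[of j i] sl by linarith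
qed


lemma span2E:
  fixes a b v :: "real^3"
  assumes "v \<in> span {a, b}"
  obtains s t where "v = s *\<^sub>R a + t *\<^sub>R b"
proof -
  obtain s where "v - s *\<^sub>R a \<in> span {b}" using assms by (auto simp: span_breakdown_eq)
  then obtain t where "v - s *\<^sub>R a = t *\<^sub>R b" by (auto simp: span_singleton)
  then show ?thesis using that[of s t] by (simp add: algebra_simps)
qed

lemma columns2: "columns (A :: real^2^3) = {column 1 A, column 2 A}"
proof -
  have "{column i A |i. i \<in> (UNIV::2 set)} = (\<lambda>i. column i A) ` {1, 2}"
    using exhaust_2 by (auto simp: image_iff) metis
  then show ?thesis unfolding columns_def by simp
qed

lemma mult_transpose_entry:
  fixes A :: "real^2^3" and D :: "real^2^2"
  shows "(A ** transpose D) $ i $ j = D$j$1 * A$i$1 + D$j$2 * A$i$2"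
  by (simp add: matrix_matrix_mult_def transpose_def sum_2 mult.commute)

lemma Delta_eq:
  assumes tmb: "tangent_moving_basis U \<xi> \<Omega>" and u: "u \<in> U"
  shows "jacobian \<xi> (at u) = \<Omega> u ** transpose (Delta \<xi> \<Omega> u)"
proof -
  let ?J = "jacobian \<xi> (at u)" and ?O = "\<Omega> u"
  have ind: "\<And>a b. a *\<^sub>R column 1 ?O + b *\<^sub>R column 2 ?O = 0 \<Longrightarrow> a = 0 \<and> b = 0"
    and sp: "\<And>j. column j ?J \<in> span (columns ?O)"
    using tmb u unfolding tangent_moving_basis_def by blast+
  have "\<exists>s t. column j ?J = s *\<^sub>R column 1 ?O + t *\<^sub>R column 2 ?O" for j
    using sp[of j] unfolding columns2 by (elim span2E) blast
  then obtain s t where st: "\<And>j. column j ?J = s j *\<^sub>R column 1 ?O + t j *\<^sub>R column 2 ?O"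
    by metis
  define D :: "real^2^2" where "D = (\<chi> j k. if k = 1 then s j else t j)"
  have ex: "?J = ?O ** transpose D"
  proof -
    have "?J $ i $ j = (?O ** transpose D) $ i $ j" for i j
    proof -
      have "?J $ i $ j = column j ?J $ i" by (simp add: column_def)
      also have "\<dots> = s j * ?O $ i $ 1 + t j * ?O $ i $ 2" by (simp only: st) (simp add: column_def)
      finally show ?thesis by (simp add: mult_transpose_entry D_def)
    qed
    then show ?thesis by (simp add: vec_eq_iff)
  qed
  have un: "D' = D" if "?J = ?O ** transpose D'" for D'
  proof -
    have "D' $ j $ k = D $ j $ k" for j k
    proof -
      have "(D'$j$1 - D$j$1) *\<^sub>R column 1 ?O + (D'$j$2 - D$j$2) *\<^sub>R column 2 ?O = 0"
      proof -
        have "(?O ** transpose D') $ i $ j = (?O ** transpose D) $ i $ j" for i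
          using that ex by simp
        then show ?thesis
          by (simp add: vec_eq_iff mult_transpose_entry column_def algebra_simps)
      qed
      then have "D'$j$1 = D$j$1 \<and> D'$j$2 = D$j$2" using ind by force
      then show ?thesis using exhaust_2[of k] by auto
    qed
    then show ?thesis by (simp add: vec_eq_iff)
  qed
  have "Delta \<xi> \<Omega> u = D"
    unfolding Delta_def
    by (rule the_equality[where P="\<lambda>D. jacobian \<xi> (at u) = \<Omega> u ** transpose D", OF ex]) (rule un)
  then show ?thesis using ex by simp
qed

lemma Omega_inj:
  assumes tmb: "tangent_moving_basis U \<xi> \<Omega>" and u: "u \<in> U" and "\<Omega> u *v w = 0"
  shows "w = 0"
proof -
  have ind: "\<And>a b. a *\<^sub>R column 1 (\<Omega> u) + b *\<^sub>R column 2 (\<Omega> u) = 0 \<Longrightarrow> a = 0 \<and> b = 0"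
    using tmb u unfolding tangent_moving_basis_def by blast
  have "w$1 *\<^sub>R column 1 (\<Omega> u) + w$2 *\<^sub>R column 2 (\<Omega> u) = 0"
    using assms(3) by (simp add: vec_eq_iff matrix_vector_mult_def sum_2 column_def mult.commute)
  then have "w$1 = 0 \<and> w$2 = 0" using ind by blast
  then show ?thesis by (simp add: vec_eq_iff forall_2)
qed

lemma det_zero_ker:
  fixes A :: "real^'n^'n"
  assumes "det A = 0"
  obtains w where "w \<noteq> 0" "A *v w = 0"
proof -
  have "\<not> invertible A" using assms invertible_det_nz by blast
  then have "\<not> (\<forall>x. A *v x = 0 \<longrightarrow> x = 0)"
    by (simp add: invertible_left_inverse matrix_left_invertible_ker[symmetric])
  then show ?thesis using that by blast
qed

lemma singular_setI:
  fixes \<xi> :: "real^2 \<Rightarrow> real^3"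
  assumes "u \<in> U" "\<xi> differentiable (at u)" "w \<noteq> 0" "jacobian \<xi> (at u) *v w = 0"
  shows "u \<in> singular_set U \<xi>"
proof -
  have "frechet_derivative \<xi> (at u) = (\<lambda>h. jacobian \<xi> (at u) *v h)"
    using assms(2) jacobian_works frechet_derivative_at by metis
  then have "frechet_derivative \<xi> (at u) w = frechet_derivative \<xi> (at u) 0" using assms(4) by simp
  then have "\<not> inj (frechet_derivative \<xi> (at u))" using assms(3) by (metis injD)
  then show ?thesis using assms(1) by (simp add: singular_set_def)
qed

lemma singular_setD:
  fixes \<xi> :: "real^2 \<Rightarrow> real^3"
  assumes "u \<in> singular_set U \<xi>" "\<xi> differentiable (at u)"
  obtains w where "w \<noteq> 0" "jacobian \<xi> (at u) *v w = 0"
proof -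
  have "frechet_derivative \<xi> (at u) = (\<lambda>h. jacobian \<xi> (at u) *v h)"
    using assms(2) jacobian_works frechet_derivative_at by metis
  moreover have "\<not> inj (frechet_derivative \<xi> (at u))" using assms(1) by (simp add: singular_set_def)
  ultimately obtain a b where "a \<noteq> b" "jacobian \<xi> (at u) *v a = jacobian \<xi> (at u) *v b"
    by (auto simp: inj_def)
  then show ?thesis using that[of "a - b"] by (simp add: matrix_vector_mult_diff_distrib)
qed

definition gram :: "real^2^3 \<Rightarrow> real" where
  "gram A = det (transpose A ** A)"

lemma gram_zero_iff:
  fixes A :: "real^2^3"
  shows "gram A = 0 \<longleftrightarrow> (\<exists>w. w \<noteq> 0 \<and> A *v w = 0)"
proof
  assume "gram A = 0"
  then obtain w where w: "w \<noteq> 0" "(transpose A ** A) *v w = 0"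
    unfolding gram_def by (rule det_zero_ker)
  then have "(A *v w) \<bullet> (A *v w) = 0"
    by (metis dot_lmul_matrix inner_zero_right matrix_vector_mul_assoc vector_transpose_matrix)
  then show "\<exists>w. w \<noteq> 0 \<and> A *v w = 0" using w by auto
next
  assume "\<exists>w. w \<noteq> 0 \<and> A *v w = 0"
  then obtain w where w: "w \<noteq> 0" "A *v w = 0" by blast
  then have "(transpose A ** A) *v w = 0" by (simp add: matrix_vector_mul_assoc[symmetric])
  then have "\<not> (\<forall>x. (transpose A ** A) *v x = 0 \<longrightarrow> x = 0)" using w by blast
  then have "\<not> invertible (transpose A ** A)"
    by (simp add: invertible_left_inverse matrix_left_invertible_ker[symmetric])
  then show "gram A = 0" unfolding gram_def using invertible_det_nz by blast
qed

lemma gram_cols: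
  fixes A :: "real^2^3"
  shows "gram A = (column 1 A \<bullet> column 1 A) * (column 2 A \<bullet> column 2 A) - (column 1 A \<bullet> column 2 A)^2"
  by (simp add: gram_def det_2 matrix_matrix_mult_def transpose_def column_def inner_vec_def sum_3 power2_eq_square algebra_simps)


lemma adj_identity:
  fixes D II :: "real^2^2"
  assumes "(D ** II) $ 1 $ 2 = (D ** II) $ 2 $ 1"
  shows "D ** Pmat ** transpose (adj2 II) ** D = det D *\<^sub>R (Pmat ** adj2 II)"
proof -
  have h: "D$1$1 * II$1$2 + D$1$2 * II$2$2 = D$2$1 * II$1$1 + D$2$2 * II$2$1"
    using assms by (simp add: matrix_matrix_mult_def sum_2)
  show ?thesis
    unfolding vec_eq_iff forall_2
    by (simp add: matrix_matrix_mult_def sum_2 adj2_def Pmat_def transpose_def det_2 algebra_simps)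
      (use h in algebra)
qed

lemma eq_reduce:
  fixes D II Iff :: "real^2^2" and g :: "real^2"
  assumes "(D ** II) $ 1 $ 2 = (D ** II) $ 2 $ 1"
  shows "g \<bullet> ((D ** Pmat ** transpose (adj2 II) ** D ** Iff ** transpose D) *v g)
       = det D * (g \<bullet> ((Pmat ** adj2 II ** Iff ** transpose D) *v g))"
proof -
  have "D ** Pmat ** transpose (adj2 II) ** D ** Iff ** transpose D
      = det D *\<^sub>R (Pmat ** adj2 II ** Iff ** transpose D)"
    unfolding adj_identity[OF assms] by (simp add: scalar_matrix_assoc)
  then show ?thesis by (simp add: scaleR_matrix_vector_assoc[symmetric])
qed

lemma continuous_on_mmult[continuous_intros]:
  fixes f :: "'a::topological_space \<Rightarrow> real^'n^'m" and g :: "'a \<Rightarrow> real^'p^'n"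
  shows "continuous_on S f \<Longrightarrow> continuous_on S g \<Longrightarrow> continuous_on S (\<lambda>x. f x ** g x)"
  unfolding matrix_matrix_mult_def by (intro continuous_intros)

lemma continuous_on_mvmult[continuous_intros]:
  fixes f :: "'a::topological_space \<Rightarrow> real^'n^'m" and g :: "'a \<Rightarrow> real^'n"
  shows "continuous_on S f \<Longrightarrow> continuous_on S g \<Longrightarrow> continuous_on S (\<lambda>x. f x *v g x)"
  unfolding matrix_vector_mult_def by (intro continuous_intros)

lemma continuous_on_transpose[continuous_intros]:
  fixes f :: "'a::topological_space \<Rightarrow> real^'n^'m"
  shows "continuous_on S f \<Longrightarrow> continuous_on S (\<lambda>x. transpose (f x))"
  unfolding transpose_def by (intro continuous_intros)

lemma continuous_on_adj2[continuous_intros]: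
  fixes f :: "'a::topological_space \<Rightarrow> real^2^2"
  shows "continuous_on S f \<Longrightarrow> continuous_on S (\<lambda>x. adj2 (f x))"
  unfolding adj2_def
proof (intro continuous_on_vec_lambda)
  fix i j :: 2 assume f: "continuous_on S f"
  show "continuous_on S (\<lambda>x. if i = 1 \<and> j = 1 then f x $ 2 $ 2 else if i = 1 \<and> j = 2 then - f x $ 1 $ 2
                 else if i = 2 \<and> j = 1 then - f x $ 2 $ 1 else f x $ 1 $ 1)"
    using exhaust_2[of i] exhaust_2[of j] by (elim disjE) (simp_all add: f continuous_intros)
qed


definition cser :: "(nat \<times> nat \<Rightarrow> real) \<Rightarrow> complex \<Rightarrow> complex \<Rightarrow> complex" where
  "cser a w1 w2 = infsum (\<lambda>(i,j). complex_of_real (a (i,j)) * w1^i * w2^j) UNIV"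

lemma cser_holo:
  fixes a :: "nat \<times> nat \<Rightarrow> real"
  assumes ac: "aconv a r"
    and h1: "g1 holomorphic_on ball z0 \<rho>" and h2: "g2 holomorphic_on ball z0 \<rho>"
    and c1: "continuous_on (cball z0 \<rho>) g1" and c2: "continuous_on (cball z0 \<rho>) g2"
    and b: "\<And>z. z \<in> cball z0 \<rho> \<Longrightarrow> norm (g1 z) \<le> p \<and> norm (g2 z) \<le> q"
    and pq: "0 \<le> p" "0 \<le> q" "p^2 + q^2 < r^2"
  shows "(\<lambda>z. cser a (g1 z) (g2 z)) holomorphic_on ball z0 \<rho>"
proof -
  define M where "M = (\<lambda>(i,j). p^i * q^j * norm (a (i,j)))"
  have Ms: "M summable_on A" for A unfolding M_def by (rule aconvD[OF ac pq])
  define T where "T = (\<lambda>(i,j) z. complex_of_real (a (i,j)) * (g1 z)^i * (g2 z)^j)"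
  have Tb: "norm (T k z) \<le> M k" if "z \<in> cball z0 \<rho>" for k z
  proof -
    obtain i j where k: "k = (i,j)" by fastforce
    have "norm (T k z) = norm (a (i,j)) * norm (g1 z)^i * norm (g2 z)^j"
      by (simp add: T_def k norm_mult norm_power)
    also have "\<dots> \<le> norm (a (i,j)) * p^i * q^j"
      using b[OF that] pq by (intro mult_mono power_mono) auto
    finally show ?thesis by (simp add: M_def k mult_ac)
  qed
  have Ta: "(\<lambda>k. norm (T k z)) summable_on A" if "z \<in> cball z0 \<rho>" for z A
    by (rule summable_on_comparison_test[OF Ms Tb[OF that]]) simp
  have Ts: "(\<lambda>k. T k z) summable_on A" if "z \<in> cball z0 \<rho>" for z A
    by (rule abs_summable_summable[OF Ta[OF that]])
  define fN where "fN N z = sum (\<lambda>k. T k z) (sq N)" for N z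
  have ce: "cser a (g1 z) (g2 z) = infsum (\<lambda>k. T k z) UNIV" for z
    by (simp add: cser_def T_def case_prod_unfold)
  have ul: "uniform_limit (cball z0 \<rho>) fN (\<lambda>z. cser a (g1 z) (g2 z)) sequentially"
    unfolding uniform_limit_iff
  proof (intro allI impI)
    fix e :: real assume e: "e > 0"
    have "\<forall>\<^sub>F n in sequentially. dist (infsum M (- sq n)) 0 < e"
      using tail_sq[OF Ms] e by (rule tendstoD)
    then show "\<forall>\<^sub>F n in sequentially. \<forall>z\<in>cball z0 \<rho>. dist (fN n z) (cser a (g1 z) (g2 z)) < e"
    proof eventually_elim
      case (elim n)
      show ?case
      proof
        fix z assume z: "z \<in> cball z0 \<rho>"
        have "dist (fN n z) (cser a (g1 z) (g2 z)) = norm (infsum (\<lambda>k. T k z) (- sq n))"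
          unfolding ce fN_def infsum_compl_sq[OF Ts[OF z]] dist_norm by (simp add: norm_minus_commute)
        also have "\<dots> \<le> infsum (\<lambda>k. norm (T k z)) (- sq n)"
          by (rule norm_infsum_bound[OF Ta[OF z]])
        also have "\<dots> \<le> infsum M (- sq n)"
          by (rule infsum_mono[OF Ta[OF z] Ms Tb[OF z]])
        also have "\<dots> < e" using elim by simp
        finally show "dist (fN n z) (cser a (g1 z) (g2 z)) < e" .
      qed
    qed
  qed
  have "\<forall>\<^sub>F n in sequentially. continuous_on (cball z0 \<rho>) (fN n) \<and> fN n holomorphic_on ball z0 \<rho>"
  proof (intro always_eventually allI conjI)
    fix n
    show "continuous_on (cball z0 \<rho>) (fN n)"
      unfolding fN_def T_def case_prod_unfold by (intro continuous_intros c1 c2)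
    show "fN n holomorphic_on ball z0 \<rho>"
      unfolding fN_def T_def case_prod_unfold by (intro holomorphic_intros h1 h2)
  qed
  then show ?thesis
    using holomorphic_uniform_limit[OF _ ul] by auto
qed

lemma cser_real:
  fixes a :: "nat \<times> nat \<Rightarrow> real"
  assumes ac: "aconv a r" and xy: "x^2 + y^2 < r^2"
  shows "cser a (of_real x) (of_real y) = of_real (infsum (\<lambda>(i,j). a (i,j) * x^i * y^j) UNIV)"
proof -
  have "(\<lambda>(i,j). \<bar>x\<bar>^i * \<bar>y\<bar>^j * norm (a (i,j))) summable_on UNIV"
    by (rule aconvD[OF ac]) (use xy in auto)
  then have "(\<lambda>(i,j). norm (a (i,j) * x^i * y^j)) summable_on UNIV"
    by (simp add: case_prod_unfold abs_mult power_abs mult_ac)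
  then have "(\<lambda>(i,j). a (i,j) * x^i * y^j) summable_on UNIV"
    by (metis (no_types, lifting) abs_summable_summable case_prod_unfold summable_on_cong)
  then have "((\<lambda>k. complex_of_real ((\<lambda>(i,j). a (i,j) * x^i * y^j) k)) has_sum
       of_real (infsum (\<lambda>(i,j). a (i,j) * x^i * y^j) UNIV)) UNIV"
    by (intro has_sum_of_real has_sum_infsum)
  then show ?thesis unfolding cser_def
    by (intro infsumI) (simp add: case_prod_unfold)
qed


lemma aconv_comp:
  fixes c :: "nat \<times> nat \<Rightarrow> real^'n"
  assumes "aconv c r" shows "aconv (\<lambda>k. c k $ m) r"
  unfolding aconv_def
proof (intro allI impI)
  fix p q :: real assume pq: "0 \<le> p" "0 \<le> q" "p^2 + q^2 < r^2"
  show "(\<lambda>(i,j). p^i * q^j * norm (c (i,j) $ m)) summable_on UNIV"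
  proof (rule summable_on_comparison_test[OF aconvD[OF assms pq]])
    fix k :: "nat \<times> nat"
    obtain i j where k: "k = (i,j)" by fastforce
    have "norm (c (i,j) $ m) \<le> norm (c (i,j))" by (simp add: component_le_norm_cart)
    then show "(case k of (i,j) \<Rightarrow> p^i * q^j * norm (c (i,j) $ m)) \<le> (case k of (i,j) \<Rightarrow> p^i * q^j * norm (c (i,j)))"
      using pq unfolding k by (auto intro!: mult_left_mono)
    show "0 \<le> (case k of (i,j) \<Rightarrow> p^i * q^j * norm (c (i,j) $ m))" using pq unfolding k by auto
  qed
qed

lemma dser_summable:
  fixes c :: "nat \<times> nat \<Rightarrow> 'a::banach" and h :: "real^2"
  assumes ac: "aconv c r" and h: "norm h < r"
  shows "(\<lambda>(i,j). ((h$1)^i * (h$2)^j) *\<^sub>R c (i,j)) summable_on UNIV"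
proof -
  have "(\<lambda>(i,j). \<bar>h$1\<bar>^i * \<bar>h$2\<bar>^j * norm (c (i,j))) summable_on UNIV"
    by (rule aconvD[OF ac]) (use abs_comp_norm2[OF h] in auto)
  then have "(\<lambda>k. norm ((\<lambda>(i,j). ((h$1)^i * (h$2)^j) *\<^sub>R c (i,j)) k)) summable_on UNIV"
    by (simp add: case_prod_unfold abs_mult power_abs)
  then show ?thesis by (rule abs_summable_summable)
qed

lemma dser_comp:
  fixes c :: "nat \<times> nat \<Rightarrow> real^'n" and h :: "real^2"
  assumes ac: "aconv c r" and h: "norm h < r"
  shows "dser c h $ m = infsum (\<lambda>(i,j). (c (i,j) $ m) * (h$1)^i * (h$2)^j) UNIV"
proof -
  have "((\<lambda>(i,j). ((h$1)^i * (h$2)^j) *\<^sub>R c (i,j)) has_sum dser c h) UNIV"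
    unfolding dser_def by (rule has_sum_infsum[OF dser_summable[OF ac h]])
  then have "((\<lambda>k. ((\<lambda>(i,j). ((h$1)^i * (h$2)^j) *\<^sub>R c (i,j)) k) $ m) has_sum (dser c h $ m)) UNIV"
    by (rule has_sum_bounded_linear[OF bounded_linear_vec_nth])
  then show ?thesis
    by (intro infsumI[symmetric]) (simp add: case_prod_unfold mult_ac)
qed

lemma analytic1_local:
  fixes \<gamma> :: "real \<Rightarrow> real^2"
  assumes "analytic1_on I \<gamma>" "t0 \<in> I"
  obtains r c where "r > 0" "ball t0 r \<subseteq> I" "aconv c r"
    "\<And>s. \<bar>s\<bar> < r \<Longrightarrow> \<gamma> (t0 + s) = dser c (vec2 s 0)"
proof -
  obtain r c1 where r: "r > 0" "ball t0 r \<subseteq> I"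
    and hs: "\<And>h. \<bar>h\<bar> < r \<Longrightarrow> ((\<lambda>n. (h^n) *\<^sub>R c1 n) has_sum \<gamma> (t0 + h)) UNIV"
    using assms unfolding analytic1_on_def by blast
  define c where "c = (\<lambda>(i::nat,j::nat). if j = 0 then c1 i else 0)"
  have inj0: "inj (\<lambda>i::nat. (i, 0::nat))" by (auto simp: inj_def)
  have "aconv c r"
    unfolding aconv_def
  proof (intro allI impI)
    fix p q :: real assume pq: "0 \<le> p" "0 \<le> q" "p^2 + q^2 < r^2"
    have "p^2 < r^2" using pq by (smt (verit) zero_le_power2)
    then have pr: "\<bar>p\<bar> < r" using r pq by (simp add: power2_less_imp_less)
    have "(\<lambda>n. (p^n) *\<^sub>R c1 n) summable_on UNIV" using hs[OF pr] summable_on_def by blast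
    then have "(\<lambda>n. norm ((p^n) *\<^sub>R c1 n)) summable_on UNIV" by (rule summable_norm_cart)
    then have s1: "(\<lambda>n. p^n * norm (c1 n)) summable_on UNIV" using pq by simp
    have "(\<lambda>(i,j). p^i * q^j * norm (c (i,j))) summable_on range (\<lambda>i. (i, 0))"
      using s1 by (subst summable_on_reindex[OF inj0]) (simp add: o_def c_def)
    then show "(\<lambda>(i,j). p^i * q^j * norm (c (i,j))) summable_on UNIV"
      by (rule summable_on_cong_neutral[THEN iffD1, rotated -1]) (auto simp: c_def)
  qed
  moreover have "\<gamma> (t0 + s) = dser c (vec2 s 0)" if "\<bar>s\<bar> < r" for s
  proof -
    have "dser c (vec2 s 0) = infsum (\<lambda>(i,j). (s^i * 0^j) *\<^sub>R c (i,j)) (range (\<lambda>i. (i, 0)))"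
      unfolding dser_def by (rule infsum_cong_neutral) (auto simp: c_def)
    also have "\<dots> = infsum (\<lambda>n. (s^n) *\<^sub>R c1 n) UNIV"
      by (subst infsum_reindex[OF inj0]) (simp add: o_def c_def)
    also have "\<dots> = \<gamma> (t0 + s)" using hs[OF that] by (simp add: infsumI)
    finally show ?thesis by simp
  qed
  ultimately show ?thesis using r that by blast
qed

lemma vec2_scaleR: "vec2 s 0 = s *\<^sub>R axis 1 1"
  by (simp add: vec2_def vec_eq_iff axis_def)

lemma gamma_deriv:
  fixes \<gamma> :: "real \<Rightarrow> real^2"
  assumes r: "r > 0" and ac: "aconv c r" and g: "\<And>s. \<bar>s\<bar> < r \<Longrightarrow> \<gamma> (t0 + s) = dser c (vec2 s 0)"
    and t: "\<bar>t - t0\<bar> < r"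
  shows "(\<gamma> has_vector_derivative dser (d1 c) (vec2 (t - t0) 0)) (at t)"
    and "isCont (\<lambda>t. dser (d1 c) (vec2 (t - t0) 0)) t"
proof -
  define e :: "real^2" where "e = axis 1 1"
  have ne: "norm ((t - t0) *\<^sub>R e) < r" using t by (simp add: e_def)
  have dl: "((\<lambda>t. (t - t0) *\<^sub>R e) has_derivative (\<lambda>v. v *\<^sub>R e)) (at t)"
    by (auto intro!: derivative_eq_intros)
  have "((\<lambda>t. dser c ((t - t0) *\<^sub>R e)) has_derivative
      (\<lambda>v. (v *\<^sub>R e)$1 *\<^sub>R dser (d1 c) ((t - t0) *\<^sub>R e) + (v *\<^sub>R e)$2 *\<^sub>R dser (d2 c) ((t - t0) *\<^sub>R e))) (at t)"
    using has_derivative_compose[OF dl dser_deriv[OF ac ne]] by (simp add: o_def)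
  then have "((\<lambda>t. dser c ((t - t0) *\<^sub>R e)) has_derivative (\<lambda>v. v *\<^sub>R dser (d1 c) ((t - t0) *\<^sub>R e))) (at t)"
    by (simp add: e_def)
  then have d: "((\<lambda>t. dser c ((t - t0) *\<^sub>R e)) has_vector_derivative dser (d1 c) (vec2 (t - t0) 0)) (at t)"
    by (simp add: has_vector_derivative_def vec2_scaleR e_def)
  show "(\<gamma> has_vector_derivative dser (d1 c) (vec2 (t - t0) 0)) (at t)"
  proof (rule has_vector_derivative_transform_within_open[OF d, where S="ball t0 r"])
    show "t \<in> ball t0 r" using t by (simp add: dist_real_def abs_minus_commute)
    fix y assume "y \<in> ball t0 r"
    then have "\<bar>y - t0\<bar> < r" by (simp add: dist_real_def abs_minus_commute)
    then show "dser c ((y - t0) *\<^sub>R e) = \<gamma> y" using g[of "y - t0"] by (simp add: vec2_scaleR e_def)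
  qed simp
  have "isCont (dser (d1 c)) ((t - t0) *\<^sub>R e)"
    using dser_deriv[OF aconv_d1[OF ac] ne] by (rule has_derivative_continuous)
  moreover have "isCont (\<lambda>t. (t - t0) *\<^sub>R e) t" by (intro continuous_intros)
  ultimately have "isCont (\<lambda>t. dser (d1 c) ((t - t0) *\<^sub>R e)) t"
    using isCont_o2 by blast
  then show "isCont (\<lambda>t. dser (d1 c) (vec2 (t - t0) 0)) t" by (simp add: vec2_scaleR e_def)
qed


lemma gram_jac_expand:
  "gram (jacobian \<xi> (at v)) =
     (\<Sum>k\<in>UNIV. pd \<xi> 1 v $ k * pd \<xi> 1 v $ k) * (\<Sum>k\<in>UNIV. pd \<xi> 2 v $ k * pd \<xi> 2 v $ k)
     - (\<Sum>k\<in>UNIV. pd \<xi> 1 v $ k * pd \<xi> 2 v $ k)^2"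
  by (simp add: gram_cols column_jacobian inner_vec_def)

lemma local_holo_gram:
  fixes \<xi> :: "real^2 \<Rightarrow> real^3" and \<gamma> :: "real \<Rightarrow> real^2"
  assumes rx: "rx > 0" "aconv c rx" "\<And>h. norm h < rx \<Longrightarrow> \<xi> (a + h) = dser c h"
    and rg: "rg > 0" "aconv cg rg" "\<And>s. \<bar>s\<bar> < rg \<Longrightarrow> \<gamma> (t0 + s) = dser cg (vec2 s 0)"
    and a: "\<gamma> t0 = a"
  obtains \<rho> G where "\<rho> > 0" "G holomorphic_on ball (complex_of_real t0) \<rho>"
    "\<And>s. \<bar>s\<bar> < \<rho> \<Longrightarrow> G (of_real (t0 + s)) = of_real (gram (jacobian \<xi> (at (\<gamma> (t0 + s)))))"
proof -
  define z0 where "z0 = complex_of_real t0"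
  define \<rho>0 where "\<rho>0 = rg / 2"
  have \<rho>0: "\<rho>0 > 0" "\<rho>0 < rg" using rg by (auto simp: \<rho>0_def)
  define gc where "gc m z = cser (\<lambda>k. cg k $ m) (z - z0) 0" for m z
  have gch: "gc m holomorphic_on ball z0 \<rho>0" for m
    unfolding gc_def
  proof (rule cser_holo[OF aconv_comp[OF rg(2)], where p = \<rho>0 and q = 0])
    show "(\<lambda>z. z - z0) holomorphic_on ball z0 \<rho>0" by (intro holomorphic_intros)
    show "(\<lambda>z. 0) holomorphic_on ball z0 \<rho>0" by (intro holomorphic_intros)
    show "continuous_on (cball z0 \<rho>0) (\<lambda>z. z - z0)" by (intro continuous_intros)
    show "continuous_on (cball z0 \<rho>0) (\<lambda>z. 0)" by (intro continuous_intros)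
    show "norm (z - z0) \<le> \<rho>0 \<and> norm (0::complex) \<le> 0" if "z \<in> cball z0 \<rho>0" for z
      using that by (simp add: dist_norm norm_minus_commute)
    show "\<rho>0^2 + 0^2 < rg^2" using \<rho>0 by (simp add: power_strict_mono)
  qed (use \<rho>0 in auto)
  have gcr: "gc m (of_real (t0 + s)) = of_real (\<gamma> (t0 + s) $ m)" if "\<bar>s\<bar> < \<rho>0" for m s
  proof -
    have s: "\<bar>s\<bar> < rg" using that \<rho>0 by simp
    have s2: "s^2 < rg^2"
    proof -
      have "\<bar>s\<bar>^2 < rg^2" using s by (intro power_strict_mono) auto
      then show ?thesis by simp
    qed
    have "gc m (of_real (t0 + s)) = cser (\<lambda>k. cg k $ m) (of_real s) (of_real 0)"
      by (simp add: gc_def z0_def)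
    also have "\<dots> = of_real (infsum (\<lambda>(i,j). cg (i,j) $ m * s^i * 0^j) UNIV)"
      by (rule cser_real[OF aconv_comp[OF rg(2)]]) (use s2 in simp)
    also have "infsum (\<lambda>(i,j). cg (i,j) $ m * s^i * 0^j) UNIV = dser cg (vec2 s 0) $ m"
      using dser_comp[OF rg(2), of "vec2 s 0" m] s by (simp add: norm_vec2)
    also have "\<dots> = \<gamma> (t0 + s) $ m" using rg(3)[OF s] by simp
    finally show ?thesis .
  qed
  define w where "w m z = gc m z - of_real (a $ m)" for m z
  have wh: "w m holomorphic_on ball z0 \<rho>0" for m
    unfolding w_def by (intro holomorphic_intros gch)
  have w0: "w m z0 = 0" for m
    using gcr[of 0 m] \<rho>0 a by (simp add: w_def z0_def)
  have wc: "isCont (w m) z0" for m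
    using holomorphic_on_imp_continuous_on[OF wh[of m]] \<rho>0
    by (simp add: continuous_on_eq_continuous_at)
  define e where "e = rx / 2"
  have e0: "e > 0" using rx by (simp add: e_def)
  obtain d1 where d1: "d1 > 0" "\<And>z. dist z z0 < d1 \<Longrightarrow> dist (w 1 z) (w 1 z0) < e"
    using wc[of 1] e0 unfolding continuous_at_eps_delta by blast
  obtain d2 where d2: "d2 > 0" "\<And>z. dist z z0 < d2 \<Longrightarrow> dist (w 2 z) (w 2 z0) < e"
    using wc[of 2] e0 unfolding continuous_at_eps_delta by blast
  define \<rho>1 where "\<rho>1 = min \<rho>0 (min d1 d2) / 2"
  have \<rho>1: "\<rho>1 > 0" "\<rho>1 < \<rho>0" "\<rho>1 < d1" "\<rho>1 < d2" using \<rho>0 d1 d2 by (auto simp: \<rho>1_def)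
  have sub: "cball z0 \<rho>1 \<subseteq> ball z0 \<rho>0" using \<rho>1 by auto
  have wb: "norm (w m z) \<le> e" if "z \<in> cball z0 \<rho>1" "m = 1 \<or> m = 2" for m z
  proof -
    have "dist z z0 < d1" "dist z z0 < d2" using that \<rho>1 by (auto simp: dist_commute)
    then show ?thesis using d1(2) d2(2) that(2) w0 by (auto simp: dist_norm less_imp_le)
  qed
  have wcc: "continuous_on (cball z0 \<rho>1) (w m)" for m
    using holomorphic_on_imp_continuous_on[OF wh[of m]] sub continuous_on_subset by blast
  have whh: "w m holomorphic_on ball z0 \<rho>1" for m
    using wh[of m] \<rho>1 holomorphic_on_subset by (metis ball_subset_cball order.trans sub)
  define E where "E j k z = cser (\<lambda>kk. dd j c kk $ k) (w 1 z) (w 2 z)" for j k z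
  have Eh: "(E j k) holomorphic_on ball z0 \<rho>1" for j k
    unfolding E_def
  proof (rule cser_holo[OF aconv_comp[OF aconv_dd[OF rx(2)]] whh whh wcc wcc, where p = e and q = e])
    show "norm (w 1 z) \<le> e \<and> norm (w 2 z) \<le> e" if "z \<in> cball z0 \<rho>1" for z
      using wb[OF that] by auto
    show "e^2 + e^2 < rx^2" using rx by (simp add: e_def power_divide)
  qed (use e0 in auto)
  define G where "G z = (\<Sum>k\<in>UNIV. E 1 k z * E 1 k z) * (\<Sum>k\<in>UNIV. E 2 k z * E 2 k z)
      - (\<Sum>k\<in>UNIV. E 1 k z * E 2 k z)^2" for z
  have Gh: "G holomorphic_on ball z0 \<rho>1"
    unfolding G_def by (intro holomorphic_intros Eh)
  have Gr: "G (of_real (t0 + s)) = of_real (gram (jacobian \<xi> (at (\<gamma> (t0 + s)))))" if s: "\<bar>s\<bar> < \<rho>1" for s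
  proof -
    define h where "h = \<gamma> (t0 + s) - a"
    have s0: "\<bar>s\<bar> < \<rho>0" using s \<rho>1 by simp
    have wr: "w m (of_real (t0 + s)) = of_real (h $ m)" for m
      using gcr[OF s0, of m] by (simp add: w_def h_def)
    have zin: "complex_of_real (t0 + s) \<in> cball z0 \<rho>1"
      using s by (simp add: z0_def dist_norm)
    have hb: "\<bar>h $ m\<bar> \<le> e" if "m = 1 \<or> m = 2" for m
      using wb[OF zin that] wr[of m] by simp
    have hn2: "(h$1)^2 + (h$2)^2 < rx^2"
    proof -
      have a1: "\<bar>h$1\<bar> \<le> e" and a2: "\<bar>h$2\<bar> \<le> e" using hb[of 1] hb[of 2] by simp_all
      have "\<bar>h$1\<bar>^2 \<le> e^2" "\<bar>h$2\<bar>^2 \<le> e^2"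
        using power_mono[OF a1 abs_ge_zero, of 2] power_mono[OF a2 abs_ge_zero, of 2] by simp_all
      then have "(h$1)^2 \<le> e^2" "(h$2)^2 \<le> e^2" by simp_all
      moreover have "e^2 + e^2 < rx^2" using rx by (simp add: e_def power_divide)
      ultimately show ?thesis by linarith
    qed
    have hn: "norm h < rx" using hn2 rx by (simp add: norm2 real_sqrt_less_iff real_sqrt_less_mono real_less_lsqrt)
    have Er: "E j k (of_real (t0 + s)) = of_real (pd \<xi> j (\<gamma> (t0 + s)) $ k)" for j k
    proof -
      have "E j k (of_real (t0 + s)) = cser (\<lambda>kk. dd j c kk $ k) (of_real (h$1)) (of_real (h$2))"
        by (simp only: E_def wr)
      also have "\<dots> = of_real (infsum (\<lambda>(i,l). dd j c (i,l) $ k * (h$1)^i * (h$2)^l) UNIV)"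
        by (rule cser_real[OF aconv_comp[OF aconv_dd[OF rx(2)]] hn2])
      also have "infsum (\<lambda>(i,l). dd j c (i,l) $ k * (h$1)^i * (h$2)^l) UNIV = dser (dd j c) h $ k"
        by (rule dser_comp[OF aconv_dd[OF rx(2)] hn, symmetric])
      also have "dser (dd j c) h = pd \<xi> j (\<gamma> (t0 + s))"
      proof -
        have "\<gamma> (t0 + s) \<in> ball a rx" using hn by (simp add: h_def dist_norm norm_minus_commute)
        then show ?thesis using local_series_pd[OF rx(2) rx(3), of "\<gamma> (t0 + s)" j] by (simp add: h_def)
      qed
      finally show ?thesis .
    qed
    show ?thesis unfolding G_def Er gram_jac_expand by simp
  qed
  show ?thesis
    by (rule that[OF \<rho>1(1) Gh[unfolded z0_def] Gr])
qed


lemma analytic2_facts: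
  fixes f :: "real^2 \<Rightarrow> real^'n"
  assumes "analytic2_on U f" "u \<in> U"
  shows "f differentiable (at u)" "pd f j differentiable (at u)"
    "pd (pd f j) i u = pd (pd f i) j u" "isCont (pd f j) u"
proof -
  obtain r c where r: "r > 0" "ball u r \<subseteq> U" "aconv c r" "\<And>h. norm h < r \<Longrightarrow> f (u + h) = dser c h"
    by (rule analytic2_local[OF assms]) blast
  have uin: "u \<in> ball u r" using r by simp
  show "f differentiable (at u)" by (rule local_series_differentiable[OF r(3) r(4) uin])
  show pdd: "pd f j differentiable (at u)"
    by (rule local_series_differentiable[OF aconv_dd[OF r(3)] local_series_pd_series[OF r(3) r(4)] uin])
  show "pd (pd f j) i u = pd (pd f i) j u" by (rule local_series_pd_pd_sym[OF r(3) r(4) uin])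
  show "isCont (pd f j) u" using pdd by (rule differentiable_imp_continuous_within)
qed

lemma analytic2_jac_cont:
  fixes f :: "real^2 \<Rightarrow> real^'n"
  assumes "analytic2_on U f" "open U"
  shows "continuous_on U (\<lambda>u. jacobian f (at u))"
proof -
  have e: "jacobian f (at u) = (\<chi> i j. pd f j u $ i)" for u
    by (simp add: jacobian_def matrix_def pd_def)
  have "continuous_on U (pd f j)" for j
    using analytic2_facts(4)[OF assms(1)] assms(2) by (simp add: continuous_on_eq_continuous_at)
  then show ?thesis unfolding e by (intro continuous_intros)
qed

lemma smooth_C2:
  fixes lam :: "real^2 \<Rightarrow> real"
  assumes "smooth_on U lam"
  shows "\<And>v. v \<in> U \<Longrightarrow> lam differentiable (at v)"
    and "\<And>v k. v \<in> U \<Longrightarrow> pd lam k differentiable (at v)"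
    and "\<And>k l. continuous_on U (pd (pd lam k) l)"
proof -
  have C2: "Ck_on (Suc (Suc 0)) U lam" using assms unfolding smooth_on_def by blast
  have pe: "pd g k = (\<lambda>u. frechet_derivative g (at u) (axis k 1))" for g :: "real^2 \<Rightarrow> real" and k
    by (simp add: pd_def fun_eq_iff)
  show "\<And>v. v \<in> U \<Longrightarrow> lam differentiable (at v)" using C2 by simp
  show "\<And>v k. v \<in> U \<Longrightarrow> pd lam k differentiable (at v)" using C2 by (simp add: pe)
  show "\<And>k l. continuous_on U (pd (pd lam k) l)" using C2 by (simp add: pe)
qed

lemma smooth_cont:
  assumes "smooth_on U f" shows "continuous_on U f"
  using assms unfolding smooth_on_def by (metis Ck_on.simps(1))

lemma DII_sym:
  assumes tmb: "tangent_moving_basis U \<xi> \<Omega>" and u: "u \<in> U"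
    and sym: "\<And>i j. pd \<xi> i u \<bullet> pd x j u = pd \<xi> j u \<bullet> pd x i u"
  shows "(Delta \<xi> \<Omega> u ** second_ff x \<Omega> u) $ 1 $ 2 = (Delta \<xi> \<Omega> u ** second_ff x \<Omega> u) $ 2 $ 1"
proof -
  let ?D = "Delta \<xi> \<Omega> u" and ?J = "jacobian \<xi> (at u)" and ?X = "jacobian x (at u)"
  have J: "?J = \<Omega> u ** transpose ?D" by (rule Delta_eq[OF tmb u])
  have t: "transpose ?J = ?D ** transpose (\<Omega> u)" by (simp add: J matrix_transpose_mul)
  have n: "A ** (- B) = - (A ** B)" for A :: "real^2^2" and B :: "real^2^2"
    by (simp add: matrix_matrix_mult_def vec_eq_iff sum_negf)
  have "?D ** second_ff x \<Omega> u = - (?D ** (transpose (\<Omega> u) ** ?X))"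
    by (simp add: second_ff_def n)
  also have "\<dots> = - (transpose ?J ** ?X)" by (simp add: t matrix_mul_assoc)
  finally have "?D ** second_ff x \<Omega> u = - (transpose ?J ** ?X)" .
  moreover have "(transpose ?J ** ?X) $ i $ j = pd \<xi> i u \<bullet> pd x j u" for i j
    by (simp add: matrix_matrix_mult_def transpose_def inner_vec_def column_jacobian[symmetric] column_def)
  ultimately show ?thesis using sym[of 1 2] by simp
qed

lemma Iff_DT:
  assumes tmb: "tangent_moving_basis U \<xi> \<Omega>" and u: "u \<in> U"
  shows "first_ff \<Omega> u ** transpose (Delta \<xi> \<Omega> u) = transpose (\<Omega> u) ** jacobian \<xi> (at u)"
  unfolding first_ff_def Delta_eq[OF tmb u] by (simp add: matrix_mul_assoc)

lemma detD_singular: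
  assumes tmb: "tangent_moving_basis U \<xi> \<Omega>" and u: "u \<in> U" and d: "\<xi> differentiable (at u)"
    and "det (Delta \<xi> \<Omega> u) = 0"
  shows "u \<in> singular_set U \<xi>"
proof -
  have "det (transpose (Delta \<xi> \<Omega> u)) = 0" using assms(4) by simp
  then obtain w where w: "w \<noteq> 0" "transpose (Delta \<xi> \<Omega> u) *v w = 0" by (rule det_zero_ker)
  have "jacobian \<xi> (at u) *v w = \<Omega> u *v (transpose (Delta \<xi> \<Omega> u) *v w)"
    unfolding Delta_eq[OF tmb u] by (simp only: matrix_vector_mul_assoc)
  then have "jacobian \<xi> (at u) *v w = 0" using w(2) by simp
  then show ?thesis by (rule singular_setI[OF u d w(1)])
qed

lemma singular_gram:
  fixes \<xi> :: "real^2 \<Rightarrow> real^3"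
  assumes u: "u \<in> U" and d: "\<xi> differentiable (at u)"
  shows "u \<in> singular_set U \<xi> \<longleftrightarrow> gram (jacobian \<xi> (at u)) = 0"
proof
  assume "u \<in> singular_set U \<xi>"
  then obtain w where "w \<noteq> 0" "jacobian \<xi> (at u) *v w = 0" using d by (rule singular_setD)
  then show "gram (jacobian \<xi> (at u)) = 0" using gram_zero_iff by blast
next
  assume "gram (jacobian \<xi> (at u)) = 0"
  then obtain w where "w \<noteq> 0" "jacobian \<xi> (at u) *v w = 0" using gram_zero_iff by blast
  then show "u \<in> singular_set U \<xi>" by (intro singular_setI[OF u d])
qed


lemma gamma_facts:
  fixes \<gamma> :: "real \<Rightarrow> real^2"
  assumes "analytic1_on I \<gamma>" "open I"
  shows "continuous_on I \<gamma>" "continuous_on I (\<lambda>t. vector_derivative \<gamma> (at t))"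
proof -
  have loc: "isCont \<gamma> t0 \<and> isCont (\<lambda>t. vector_derivative \<gamma> (at t)) t0" if t0: "t0 \<in> I" for t0
  proof -
    obtain r c where r: "r > 0" "ball t0 r \<subseteq> I" "aconv c r"
      "\<And>s. \<bar>s\<bar> < r \<Longrightarrow> \<gamma> (t0 + s) = dser c (vec2 s 0)"
      by (rule analytic1_local[OF assms(1) t0]) blast
    have vd: "vector_derivative \<gamma> (at t) = dser (d1 c) (vec2 (t - t0) 0)" if "t \<in> ball t0 r" for t
    proof -
      have "\<bar>t - t0\<bar> < r" using that by (simp add: dist_real_def abs_minus_commute)
      then show ?thesis by (intro vector_derivative_at gamma_deriv(1)[OF r(1) r(3) r(4)])
    qed
    have "\<forall>\<^sub>F t in nhds t0. t \<in> ball t0 r"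
      by (rule eventually_nhds_in_open) (use r in auto)
    then have ev: "\<forall>\<^sub>F t in nhds t0. vector_derivative \<gamma> (at t) = dser (d1 c) (vec2 (t - t0) 0)"
      by (rule eventually_mono) (rule vd)
    have tt: "\<bar>t0 - t0\<bar> < r" using r(1) by simp
    have "isCont (\<lambda>t. dser (d1 c) (vec2 (t - t0) 0)) t0"
      by (rule gamma_deriv(2)[OF r(1) r(3) r(4) tt])
    then have c2: "isCont (\<lambda>t. vector_derivative \<gamma> (at t)) t0"
      using isCont_cong[OF ev] by blast
    have "(\<gamma> has_vector_derivative dser (d1 c) (vec2 (t0 - t0) 0)) (at t0)"
      by (rule gamma_deriv(1)[OF r(1) r(3) r(4) tt])
    then have "isCont \<gamma> t0" by (rule has_vector_derivative_continuous)
    then show ?thesis using c2 by blast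
  qed
  show "continuous_on I \<gamma>" using loc assms(2) by (simp add: continuous_on_eq_continuous_at)
  show "continuous_on I (\<lambda>t. vector_derivative \<gamma> (at t))"
    using loc assms(2) by (simp add: continuous_on_eq_continuous_at)
qed

lemma ofreal_limpt:
  fixes s e :: real
  assumes "e > 0"
  shows "complex_of_real s islimpt (complex_of_real ` ball s e)"
  unfolding islimpt_approachable
proof (intro allI impI)
  fix \<epsilon> :: real assume \<epsilon>: "\<epsilon> > 0"
  define y where "y = s + min \<epsilon> e / 2"
  have "y \<in> ball s e" using \<epsilon> assms by (simp add: y_def dist_real_def)
  moreover have "complex_of_real y \<noteq> complex_of_real s" using \<epsilon> assms by (simp add: y_def)
  moreover have "dist (complex_of_real y) (complex_of_real s) < \<epsilon>"
    using \<epsilon> assms by (simp add: y_def dist_norm norm_of_real[symmetric] of_real_diff[symmetric] del: of_real_diff)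
  ultimately show "\<exists>x'\<in>complex_of_real ` ball s e. x' \<noteq> complex_of_real s \<and> dist x' (complex_of_real s) < \<epsilon>"
    by blast
qed

lemma identity_interval:
  fixes K :: "real \<Rightarrow> real"
  assumes oI: "open I" and cI: "connected I"
    and loc: "\<And>t. t \<in> I \<Longrightarrow> \<exists>\<rho>>0. ball t \<rho> \<subseteq> I \<and> (\<exists>G. G holomorphic_on ball (complex_of_real t) \<rho> \<and>
                 (\<forall>y\<in>ball t \<rho>. G (complex_of_real y) = complex_of_real (K y)))"
  shows "(\<forall>t\<in>I. K t = 0) \<or> (\<forall>t\<in>I. \<forall>e>0. \<exists>s\<in>ball t e \<inter> I. K s \<noteq> 0)"
proof -
  define A where "A = {t\<in>I. \<exists>e>0. ball t e \<subseteq> I \<and> (\<forall>s\<in>ball t e. K s = 0)}"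
  have AI: "A \<subseteq> I" by (auto simp: A_def)
  have Aopen: "open A"
    unfolding open_contains_ball
  proof
    fix t assume "t \<in> A"
    then obtain e where e: "e > 0" "ball t e \<subseteq> I" "\<forall>s\<in>ball t e. K s = 0" by (auto simp: A_def)
    have "ball t e \<subseteq> A"
    proof
      fix s assume s: "s \<in> ball t e"
      define e' where "e' = e - dist t s"
      have "e' > 0" using s by (simp add: e'_def)
      moreover have "ball s e' \<subseteq> ball t e"
      proof
        fix x assume "x \<in> ball s e'"
        then have "dist s x < e - dist t s" by (simp add: e'_def)
        moreover have "dist t x \<le> dist t s + dist s x" by (rule dist_triangle)
        ultimately show "x \<in> ball t e" by simp
      qed
      ultimately show "s \<in> A" using e s unfolding A_def by blast
    qed
    then show "\<exists>e>0. ball t e \<subseteq> A" using e by blast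
  qed
  have clos: "t \<in> A" if t: "t \<in> I" and near: "\<And>e. e > 0 \<Longrightarrow> \<exists>s\<in>A. dist s t < e" for t
  proof -
    obtain \<rho> G where \<rho>: "\<rho> > 0" "ball t \<rho> \<subseteq> I" and Gh: "G holomorphic_on ball (complex_of_real t) \<rho>"
      and Gr: "\<And>y. y \<in> ball t \<rho> \<Longrightarrow> G (complex_of_real y) = complex_of_real (K y)"
      using loc[OF t] by blast
    obtain s where s: "s \<in> A" "dist s t < \<rho>/2" using near[of "\<rho>/2"] \<rho> by auto
    obtain es where es: "es > 0" "\<forall>y\<in>ball s es. K y = 0" using s(1) by (auto simp: A_def)
    define e' where "e' = min es (\<rho>/2)"
    have e': "e' > 0" using es \<rho> by (simp add: e'_def)
    have ins: "y \<in> ball t \<rho>" if "y \<in> ball s e'" for y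
    proof -
      have "dist t y \<le> dist t s + dist s y" by (rule dist_triangle)
      also have "\<dots> < \<rho>" using that s(2) by (simp add: e'_def dist_commute)
      finally show ?thesis by simp
    qed
    have Z: "G z = 0" if zin: "z \<in> complex_of_real ` ball s e'" for z
    proof -
      obtain y where y: "y \<in> ball s e'" "z = complex_of_real y" using zin by blast
      have "K y = 0" using es(2) y(1) by (simp add: e'_def)
      then show ?thesis using Gr[OF ins[OF y(1)]] y(2) by simp
    qed
    have sub: "complex_of_real ` ball s e' \<subseteq> ball (complex_of_real t) \<rho>"
    proof
      fix z assume "z \<in> complex_of_real ` ball s e'"
      then obtain y where y: "y \<in> ball s e'" "z = complex_of_real y" by blast
      have "dist t y < \<rho>" using ins[OF y(1)] by simp
      then show "z \<in> ball (complex_of_real t) \<rho>"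
        using y(2) by (simp add: dist_norm norm_of_real[symmetric] of_real_diff[symmetric] del: of_real_diff)
    qed
    have sin: "complex_of_real s \<in> ball (complex_of_real t) \<rho>"
      using subsetD[OF sub, of "complex_of_real s"] e' by auto
    have G0: "G w = 0" if "w \<in> ball (complex_of_real t) \<rho>" for w
      by (rule analytic_continuation[OF Gh open_ball convex_connected[OF convex_ball] sub sin ofreal_limpt[OF e'] Z that])
    have "\<forall>y\<in>ball t \<rho>. K y = 0"
    proof
      fix y assume y: "y \<in> ball t \<rho>"
      have "complex_of_real y \<in> ball (complex_of_real t) \<rho>"
        using y by (simp add: dist_norm norm_of_real[symmetric] of_real_diff[symmetric] del: of_real_diff)
      then have "complex_of_real (K y) = 0" using G0 Gr[OF y] by simp
      then show "K y = 0" by simp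
    qed
    then show "t \<in> A" using t \<rho> unfolding A_def by blast
  qed
  have Bopen: "open (I - A)"
    unfolding open_contains_ball
  proof
    fix t assume t: "t \<in> I - A"
    then obtain e where e: "e > 0" "\<forall>s\<in>A. \<not> dist s t < e" using clos by blast
    obtain e2 where e2: "e2 > 0" "ball t e2 \<subseteq> I" using t oI open_contains_ball by blast
    have "ball t (min e e2) \<subseteq> I - A" using e e2 by (auto simp: dist_commute)
    then show "\<exists>e>0. ball t e \<subseteq> I - A" using e e2 by (intro exI[of _ "min e e2"]) auto
  qed
  have "A \<inter> I = {} \<or> (I - A) \<inter> I = {}"
    by (rule connectedD[OF cI Aopen Bopen]) auto
  then show ?thesis
  proof
    assume "A \<inter> I = {}"
    then have "A = {}" using AI by blast
    have "\<exists>s\<in>ball t e \<inter> I. K s \<noteq> 0" if t: "t \<in> I" and e: "e > 0" for t e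
    proof (rule ccontr)
      assume "\<not> ?thesis"
      then have z: "\<forall>s\<in>ball t e \<inter> I. K s = 0" by blast
      obtain e2 where e2: "e2 > 0" "ball t e2 \<subseteq> I" using t oI open_contains_ball by blast
      have "t \<in> A" unfolding A_def using t e e2 z by (intro CollectI conjI exI[of _ "min e e2"]) auto
      then show False using \<open>A = {}\<close> by simp
    qed
    then show ?thesis by blast
  next
    assume "(I - A) \<inter> I = {}"
    then have "I \<subseteq> A" by blast
    then have "K t = 0" if "t \<in> I" for t using that unfolding A_def by (auto dest!: subsetD)
    then show ?thesis by blast
  qed
qed


theorem corollary4p1:
  fixes U :: "(real^2) set" and x \<xi> :: "real^2 \<Rightarrow> real^3"
    and \<Omega> :: "real^2 \<Rightarrow> real^2^3" and I :: "real set" and \<gamma> :: "real \<Rightarrow> real^2"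
  assumes "open U"
    and "analytic2_on U x" and "analytic2_on U \<xi>" and "\<forall>u\<in>U. norm (\<xi> u) = 1"
    and "proper_frontal U \<xi>"
    and "normal_congruence U x \<xi>"
    and "tangent_moving_basis U \<xi> \<Omega>"
    and "is_interval I" and "open I" and "I \<noteq> {}"
    and "analytic1_on I \<gamma>" and "\<gamma> ` I \<subseteq> U"
    and "\<forall>t\<in>I. let g' = vector_derivative \<gamma> (at t); u = \<gamma> t; D = Delta \<xi> \<Omega> u in
           g' \<bullet> ((D ** Pmat ** transpose (adj2 (second_ff x \<Omega> u)) ** D ** first_ff \<Omega> u
                   ** transpose D) *v g') = 0"
  shows "\<gamma> ` I \<subseteq> singular_set U \<xi> \<or>
         (\<forall>t\<in>I. let g' = vector_derivative \<gamma> (at t); u = \<gamma> t; D = Delta \<xi> \<Omega> u in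
           g' \<bullet> ((Pmat ** adj2 (second_ff x \<Omega> u) ** first_ff \<Omega> u ** transpose D) *v g') = 0)"
proof -
  note oU = assms(1) and ax = assms(2) and a\<xi> = assms(3) and n\<xi> = assms(4)
    and nc0 = assms(6) and tmb = assms(7) and iI = assms(8) and oI = assms(9)
    and a\<gamma> = assms(11) and \<gamma>U = assms(12) and hyp = assms(13)
  have \<gamma>U': "\<And>t. t \<in> I \<Longrightarrow> \<gamma> t \<in> U" using \<gamma>U by blast
  obtain lam where lam: "smooth_on U lam"
    and nc: "\<And>v j. v \<in> U \<Longrightarrow> \<xi> v \<bullet> column j (jacobian (\<lambda>v. x v + lam v *\<^sub>R \<xi> v) (at v)) = 0"
    using nc0 unfolding normal_congruence_def by blast
  have d\<xi>: "\<And>v. v \<in> U \<Longrightarrow> \<xi> differentiable (at v)" using analytic2_facts(1)[OF a\<xi>] .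
  have dx: "\<And>v. v \<in> U \<Longrightarrow> x differentiable (at v)" using analytic2_facts(1)[OF ax] .
  have dx1: "\<And>v j. v \<in> U \<Longrightarrow> pd x j differentiable (at v)" using analytic2_facts(2)[OF ax] .
  have n\<xi>': "\<And>v. v \<in> U \<Longrightarrow> norm (\<xi> v) = 1" using n\<xi> by blast
  have sym: "pd \<xi> i u \<bullet> pd x j u = pd \<xi> j u \<bullet> pd x i u" if u: "u \<in> U" for u i j
    by (rule congruence_sym[OF oU u d\<xi> n\<xi>' dx dx1 analytic2_facts(3)[OF ax u]
          smooth_C2[OF lam] nc])
  define Fc where "Fc = (\<lambda>t. let g' = vector_derivative \<gamma> (at t); u = \<gamma> t; D = Delta \<xi> \<Omega> u in
           g' \<bullet> ((Pmat ** adj2 (second_ff x \<Omega> u) ** first_ff \<Omega> u ** transpose D) *v g'))"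
  define K where "K t = gram (jacobian \<xi> (at (\<gamma> t)))" for t
  have key: "det (Delta \<xi> \<Omega> (\<gamma> t)) * Fc t = 0" if t: "t \<in> I" for t
  proof -
    have "vector_derivative \<gamma> (at t) \<bullet> ((Delta \<xi> \<Omega> (\<gamma> t) ** Pmat ** transpose (adj2 (second_ff x \<Omega> (\<gamma> t)))
          ** Delta \<xi> \<Omega> (\<gamma> t) ** first_ff \<Omega> (\<gamma> t) ** transpose (Delta \<xi> \<Omega> (\<gamma> t))) *v vector_derivative \<gamma> (at t)) = 0"
      using hyp t unfolding Let_def by blast
    then show ?thesis
      unfolding Fc_def Let_def eq_reduce[OF DII_sym[OF tmb \<gamma>U'[OF t] sym[OF \<gamma>U'[OF t]]]] .
  qed
  have Fc_alt: "Fc t = vector_derivative \<gamma> (at t) \<bullet> ((Pmat ** adj2 (- (transpose (\<Omega> (\<gamma> t)) ** jacobian x (at (\<gamma> t))))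
       ** (transpose (\<Omega> (\<gamma> t)) ** jacobian \<xi> (at (\<gamma> t)))) *v vector_derivative \<gamma> (at t))"
    if t: "t \<in> I" for t
    unfolding Fc_def Let_def second_ff_def Iff_DT[OF tmb \<gamma>U'[OF t], symmetric]
    by (simp add: matrix_mul_assoc)
  have g: "continuous_on I \<gamma>" "continuous_on I (\<lambda>t. vector_derivative \<gamma> (at t))"
    using gamma_facts[OF a\<gamma> oI] by auto
  have O: "continuous_on I (\<lambda>t. \<Omega> (\<gamma> t))"
    using tmb unfolding tangent_moving_basis_def
    by (intro continuous_on_compose2[OF smooth_cont g(1) \<gamma>U]) blast
  have X: "continuous_on I (\<lambda>t. jacobian x (at (\<gamma> t)))"
    by (rule continuous_on_compose2[OF analytic2_jac_cont[OF ax oU] g(1) \<gamma>U])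
  have J: "continuous_on I (\<lambda>t. jacobian \<xi> (at (\<gamma> t)))"
    by (rule continuous_on_compose2[OF analytic2_jac_cont[OF a\<xi> oU] g(1) \<gamma>U])
  have Fcont: "continuous_on I Fc"
  proof -
    have "continuous_on I (\<lambda>t. vector_derivative \<gamma> (at t) \<bullet> ((Pmat ** adj2 (- (transpose (\<Omega> (\<gamma> t)) ** jacobian x (at (\<gamma> t))))
       ** (transpose (\<Omega> (\<gamma> t)) ** jacobian \<xi> (at (\<gamma> t)))) *v vector_derivative \<gamma> (at t)))"
      by (intro continuous_intros g O X J)
    moreover have "continuous_on I Fc = continuous_on I (\<lambda>t. vector_derivative \<gamma> (at t) \<bullet> ((Pmat ** adj2 (- (transpose (\<Omega> (\<gamma> t)) ** jacobian x (at (\<gamma> t))))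
       ** (transpose (\<Omega> (\<gamma> t)) ** jacobian \<xi> (at (\<gamma> t)))) *v vector_derivative \<gamma> (at t)))"
      by (rule continuous_on_cong[OF refl]) (rule Fc_alt)
    ultimately show ?thesis by simp
  qed
  have KF: "Fc t = 0" if t: "t \<in> I" and K: "K t \<noteq> 0" for t
  proof -
    have "\<gamma> t \<notin> singular_set U \<xi>"
      using singular_gram[OF \<gamma>U'[OF t] d\<xi>[OF \<gamma>U'[OF t]]] K by (simp add: K_def)
    then have "det (Delta \<xi> \<Omega> (\<gamma> t)) \<noteq> 0"
      using detD_singular[OF tmb \<gamma>U'[OF t] d\<xi>[OF \<gamma>U'[OF t]]] by blast
    then show ?thesis using key[OF t] by simp
  qed
  have loc: "\<exists>\<rho>>0. ball t \<rho> \<subseteq> I \<and> (\<exists>G. G holomorphic_on ball (complex_of_real t) \<rho> \<and>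
                 (\<forall>y\<in>ball t \<rho>. G (complex_of_real y) = complex_of_real (K y)))" if t: "t \<in> I" for t
  proof -
    obtain rg cg where rg: "rg > 0" "ball t rg \<subseteq> I" "aconv cg rg"
      "\<And>s. \<bar>s\<bar> < rg \<Longrightarrow> \<gamma> (t + s) = dser cg (vec2 s 0)"
      by (rule analytic1_local[OF a\<gamma> t]) blast
    obtain rx c where rx: "rx > 0" "ball (\<gamma> t) rx \<subseteq> U" "aconv c rx"
      "\<And>h. norm h < rx \<Longrightarrow> \<xi> (\<gamma> t + h) = dser c h"
      by (rule analytic2_local[OF a\<xi> \<gamma>U'[OF t]]) blast
    obtain \<rho> G where \<rho>: "\<rho> > 0" and Gh: "G holomorphic_on ball (complex_of_real t) \<rho>"
      and Gr: "\<And>s. \<bar>s\<bar> < \<rho> \<Longrightarrow> G (of_real (t + s)) = of_real (gram (jacobian \<xi> (at (\<gamma> (t + s)))))"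
      by (rule local_holo_gram[OF rx(1) rx(3) rx(4) rg(1) rg(3) rg(4) refl]; (assumption | rule that; assumption))
    define \<rho>' where "\<rho>' = min \<rho> rg"
    have "\<rho>' > 0" using \<rho> rg by (simp add: \<rho>'_def)
    moreover have "ball t \<rho>' \<subseteq> I" using rg(2) by (auto simp: \<rho>'_def)
    moreover have "G holomorphic_on ball (complex_of_real t) \<rho>'"
      using Gh by (rule holomorphic_on_subset) (auto simp: \<rho>'_def)
    moreover have "G (complex_of_real y) = complex_of_real (K y)" if y: "y \<in> ball t \<rho>'" for y
    proof -
      have "\<bar>y - t\<bar> < \<rho>" using y by (simp add: \<rho>'_def dist_real_def abs_minus_commute)
      from Gr[OF this] show ?thesis by (simp add: K_def)
    qed
    ultimately show ?thesis by blast
  qed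
  have "(\<forall>t\<in>I. K t = 0) \<or> (\<forall>t\<in>I. \<forall>e>0. \<exists>s\<in>ball t e \<inter> I. K s \<noteq> 0)"
    by (rule identity_interval[OF oI is_interval_connected[OF iI] loc])
  then show ?thesis
  proof
    assume "\<forall>t\<in>I. K t = 0"
    then have "\<gamma> t \<in> singular_set U \<xi>" if "t \<in> I" for t
      using singular_gram[OF \<gamma>U'[OF that] d\<xi>[OF \<gamma>U'[OF that]]] that by (simp add: K_def)
    then show ?thesis by blast
  next
    assume dense: "\<forall>t\<in>I. \<forall>e>0. \<exists>s\<in>ball t e \<inter> I. K s \<noteq> 0"
    have "Fc t = 0" if t: "t \<in> I" for t
    proof (rule ccontr)
      assume ne: "Fc t \<noteq> 0"
      have "isCont Fc t" using Fcont oI t by (simp add: continuous_on_eq_continuous_at)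
      then obtain d where d: "d > 0" "\<And>s. dist s t < d \<Longrightarrow> dist (Fc s) (Fc t) < \<bar>Fc t\<bar>"
        using ne unfolding continuous_at_eps_delta by (metis zero_less_abs_iff)
      obtain s where s: "s \<in> ball t d" "s \<in> I" "K s \<noteq> 0" using dense t d(1) by blast
      have "Fc s = 0" by (rule KF[OF s(2,3)])
      moreover have "dist (Fc s) (Fc t) < \<bar>Fc t\<bar>" using d(2) s(1) by (simp add: dist_commute)
      ultimately show False by (simp add: dist_real_def)
    qed
    then have "\<forall>t\<in>I. Fc t = 0" by blast
    then show ?thesis unfolding Fc_def Let_def by (rule disjI2)
  qed
qed


end
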